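(* Let $K\ge2$, $V\ge1$, let $\phi_1,\dots,\phi_K\in\Delta_{V-1}$ have strictly positive entries, let $p=(p_v)\in\Delta_{V-1}$, and let $H(\theta)=\sum_{v=1}^Vp_v\log\big(\sum_{k=1}^K\theta_k\phi_k(v)\big)$. Assume $H$ attains its maximum over $\Delta_{K-1}$ only at a point $\theta^*$ with all coordinates strictly positive, and that $d^\top\nabla^2H(\theta^* )d<0$ for all nonzero $d\in\mathbb{R}^K$ with $\mathbf{1}_K^\top d=0$. Let $\alpha\in(0,\infty)^K$, $\widehat H(\theta)=H(\theta^* )-\mathrm{KL}(\theta^*|\theta)$, and let $\rho_n$ be the correlation of $e^{nH(\theta)}$ and $e^{n\widehat H(\theta)}$ for $\theta\sim\mathrm{Dir}_\alpha$. Then as $n\to\infty$, $$\rho_n^2\to\rho^2:=\frac{|\det Q|^{1/2}|\det R|^{1/2}}{\left|\det\!\left(\frac{Q+R}{2}\right)\right|},$$ where $Q=\nabla^2H(\theta^* )$ and $R=-\mathrm{diag}(1/\theta^*_1,\dots,1/\theta^*_K)$.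
   Context: $\Delta_{d-1}=\{x\in\mathbb{R}^d:x_i\ge0,\sum_ix_i=1\}$. $\mathrm{Dir}_\alpha$ is the Dirichlet distribution on $\Delta_{K-1}$ with density $\frac{1}{B(\alpha)}\prod_i\theta_i^{\alpha_i-1}$. $\mathrm{KL}(\theta^*|\theta)=\sum_k\theta^*_k\log(\theta^*_k/\theta_k)$, equal to $+\infty$ if some $\theta_k=0$ (with $e^{-\infty}=0$). $R$ equals minus the Hessian of $\theta\mapsto\mathrm{KL}(\theta^*|\theta)$ at $\theta^*$. $H$ is the LDA log-likelihood: $\phi_k(v)$ is the probability of word $v$ under topic $k$, $p_v$ the empirical frequency of word $v$. *)

theory Defs
  imports "HOL-Analysis.Analysis"
begin

definition prob_simplex :: "('k::finite \<Rightarrow> real) set" where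
  "prob_simplex = {x. (\<forall>i. 0 \<le> x i) \<and> (\<Sum>i\<in>UNIV. x i) = 1}"

definition mbeta :: "('k::finite \<Rightarrow> real) \<Rightarrow> real" where
  "mbeta \<alpha> = (\<Prod>i\<in>UNIV. Gamma (\<alpha> i)) / Gamma (\<Sum>i\<in>UNIV. \<alpha> i)"

text \<open>Dirichlet density on the prob_simplex (w.r.t. Lebesgue measure on the K-1 free coordinates).\<close>
definition dir_density :: "('k::finite \<Rightarrow> real) \<Rightarrow> ('k \<Rightarrow> real) \<Rightarrow> real" where
  "dir_density \<alpha> \<theta> =
     (if \<theta> \<in> prob_simplex then (\<Prod>i\<in>UNIV. \<theta> i powr (\<alpha> i - 1)) / mbeta \<alpha> else 0)"

text \<open>The distinguished coordinate eliminated via the constraint sum = 1, and the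
  map from the K-1 free coordinates to the point of the hyperplane sum = 1.\<close>
definition last_coord :: "'k" where "last_coord = (SOME k. True)"

definition lift_simplex :: "('k::finite \<Rightarrow> real) \<Rightarrow> ('k \<Rightarrow> real)" where
  "lift_simplex x = x(last_coord := 1 - (\<Sum>j\<in>UNIV - {last_coord}. x j))"

definition dir_expect :: "('k::finite \<Rightarrow> real) \<Rightarrow> (('k \<Rightarrow> real) \<Rightarrow> real) \<Rightarrow> real" where
  "dir_expect \<alpha> f =
     (\<integral>x. f (lift_simplex x) * dir_density \<alpha> (lift_simplex x)
        \<partial>(PiM (UNIV - {last_coord}) (\<lambda>_. lborel)))"

definition dir_corr :: "('k::finite \<Rightarrow> real) \<Rightarrow> (('k \<Rightarrow> real) \<Rightarrow> real) \<Rightarrow> (('k \<Rightarrow> real) \<Rightarrow> real) \<Rightarrow> real" where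
  "dir_corr \<alpha> X Y =
     (dir_expect \<alpha> (\<lambda>t. X t * Y t) - dir_expect \<alpha> X * dir_expect \<alpha> Y) /
     sqrt ((dir_expect \<alpha> (\<lambda>t. (X t)\<^sup>2) - (dir_expect \<alpha> X)\<^sup>2) *
           (dir_expect \<alpha> (\<lambda>t. (Y t)\<^sup>2) - (dir_expect \<alpha> Y)\<^sup>2))"

definition lda_H :: "('k::finite \<Rightarrow> 'v::finite \<Rightarrow> real) \<Rightarrow> ('v \<Rightarrow> real) \<Rightarrow> ('k \<Rightarrow> real) \<Rightarrow> real" where
  "lda_H \<phi> p \<theta> = (\<Sum>v\<in>UNIV. p v * ln (\<Sum>k\<in>UNIV. \<theta> k * \<phi> k v))"

text \<open>KL divergence KL(a|b) (only used where all b_k > 0).\<close>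
definition KL :: "('k::finite \<Rightarrow> real) \<Rightarrow> ('k \<Rightarrow> real) \<Rightarrow> real" where
  "KL a b = (\<Sum>k\<in>UNIV. a k * ln (a k / b k))"

text \<open>exp(n * Hhat(theta)) with Hhat(theta) = H(theta*) - KL(theta*|theta); since
  KL = +infinity when some theta_k = 0, this is 0 there (e^{-infinity} = 0).\<close>
definition exp_Hhat :: "real \<Rightarrow> real \<Rightarrow> ('k::finite \<Rightarrow> real) \<Rightarrow> ('k \<Rightarrow> real) \<Rightarrow> real" where
  "exp_Hhat n Hstar \<theta>s \<theta> =
     (if (\<forall>k. 0 < \<theta> k) then exp (n * (Hstar - KL \<theta>s \<theta>)) else 0)"

definition hessian :: "(('k \<Rightarrow> real) \<Rightarrow> real) \<Rightarrow> ('k \<Rightarrow> real) \<Rightarrow> 'k \<Rightarrow> 'k \<Rightarrow> real" where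
  "hessian f x i j =
     deriv (\<lambda>t. deriv (\<lambda>s. f (\<lambda>l. x l + s * (if l = i then 1 else 0)
                                       + t * (if l = j then 1 else 0))) 0) 0"

end

theory Submission
  imports Defs "HOL-Probability.Probability" "HOL-Real_Asymp.Real_Asymp"
begin


lemma gauss1_nn:
  fixes a b :: real
  assumes a: "a > 0"
  shows "(\<integral>\<^sup>+t. ennreal (exp (-(a*t\<^sup>2 + 2*b*t)/2)) \<partial>lborel) = ennreal (sqrt (2*pi/a) * exp (b\<^sup>2/(2*a)))"
proof -
  define C where "C = sqrt (2*pi/a) * exp (b\<^sup>2/(2*a))"
  have C: "C \<ge> 0" unfolding C_def using a by simp
  have eq: "exp (-(a*t\<^sup>2 + 2*b*t)/2) = C * normal_density (-b/a) (1/sqrt a) t" for t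
  proof -
    have s: "(1/sqrt a)\<^sup>2 = 1/a" using a by (simp add: power_divide)
    have "normal_density (-b/a) (1/sqrt a) t = 1 / sqrt (2*pi/a) * exp (-(t + b/a)\<^sup>2 / (2/a))"
      unfolding normal_density_def s by simp
    also have "-(t + b/a)\<^sup>2 / (2/a) = -(a*t\<^sup>2 + 2*b*t)/2 - b\<^sup>2/(2*a)"
      using a by (simp add: field_simps power2_eq_square)
    finally have "normal_density (-b/a) (1/sqrt a) t = 1 / sqrt (2*pi/a) * (exp (-(a*t\<^sup>2 + 2*b*t)/2) / exp (b\<^sup>2/(2*a)))"
      by (simp add: exp_diff)
    then show ?thesis unfolding C_def using a by (simp add: field_simps)
  qed
  have "(\<integral>\<^sup>+t. ennreal (exp (-(a*t\<^sup>2 + 2*b*t)/2)) \<partial>lborel) = (\<integral>\<^sup>+t. ennreal C * ennreal (normal_density (-b/a) (1/sqrt a) t) \<partial>lborel)"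
    by (rule nn_integral_cong, subst eq, rule ennreal_mult[OF C], simp)
  also have "\<dots> = ennreal C * (\<integral>\<^sup>+t. ennreal (normal_density (-b/a) (1/sqrt a) t) \<partial>lborel)"
    by (rule nn_integral_cmult) simp
  also have "(\<integral>\<^sup>+t. ennreal (normal_density (-b/a) (1/sqrt a) t) \<partial>lborel) = 1"
    using integrable_normal_density[of "1/sqrt a"] integral_normal_density[of "1/sqrt a"] a
    by (subst nn_integral_eq_integral) auto
  finally show ?thesis unfolding C_def by simp
qed

definition qf :: "'i set \<Rightarrow> ('i \<Rightarrow> 'i \<Rightarrow> real) \<Rightarrow> ('i \<Rightarrow> real) \<Rightarrow> real" where
  "qf J A y = (\<Sum>i\<in>J. \<Sum>j\<in>J. y i * A i j * y j)"

definition posdefJ :: "'i set \<Rightarrow> ('i \<Rightarrow> 'i \<Rightarrow> real) \<Rightarrow> bool" where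
  "posdefJ J A \<longleftrightarrow> (\<forall>i\<in>J. \<forall>j\<in>J. A i j = A j i) \<and> (\<forall>y. (\<exists>i\<in>J. y i \<noteq> 0) \<longrightarrow> 0 < qf J A y)"

definition embM :: "'k::finite set \<Rightarrow> ('k \<Rightarrow> 'k \<Rightarrow> real) \<Rightarrow> real^'k^'k" where
  "embM J A = (\<chi> i j. if i \<in> J \<and> j \<in> J then A i j else if i = j then 1 else 0)"

definition detE :: "'k::finite set \<Rightarrow> ('k \<Rightarrow> 'k \<Rightarrow> real) \<Rightarrow> real" where
  "detE J A = det (embM J A)"

lemma qf_cong: "(\<And>i. i \<in> J \<Longrightarrow> y i = z i) \<Longrightarrow> qf J A y = qf J A z"
  unfolding qf_def by (intro sum.cong refl) auto

lemma measurable_qf[measurable]: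
  assumes "finite J"
  shows "qf J A \<in> borel_measurable (PiM J (\<lambda>_. lborel))"
  unfolding qf_def[abs_def] by measurable

lemma sum_delta_mult: "(\<Sum>l\<in>(UNIV::'k::finite set). f l * (if l = j then 1 else 0)) = (f j :: real)"
  by (simp add: if_distrib sum.delta cong: if_cong)

lemma detE_insert:
  fixes A :: "'k::finite \<Rightarrow> 'k \<Rightarrow> real"
  assumes a: "a \<notin> J" and sym: "\<And>i j. i \<in> insert a J \<Longrightarrow> j \<in> insert a J \<Longrightarrow> A i j = A j i"
    and aa: "A a a \<noteq> 0"
  shows "detE (insert a J) A = A a a * detE J (\<lambda>i j. A i j - A i a * A a j / A a a)"
proof -
  define S where "S = (\<lambda>i j. A i j - A i a * A a j / A a a)"
  define M where "M = embM (insert a J) A"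
  define N where "N = embM J S"
  define w where "w = (\<lambda>j. if j \<in> J then A a j / A a a else 0)"
  define E :: "real^'k^'k" where "E = (\<chi> i j. (if i = j then 1 else 0) - (if i = a then w j else 0))"
  define x :: "real^'k" where "x = - (\<Sum>j\<in>J. w j *s row j (mat 1))"
  have xs: "x \<in> vec.span {row j (mat 1 :: real^'k^'k) |j. j \<noteq> a}"
    unfolding x_def
    by (intro vec.span_neg vec.span_sum vec.span_scale vec.span_base) (use a in auto)
  have xj: "x $ j = - w j" for j
    unfolding x_def by (auto simp: row_def mat_def sum_negf w_def if_distrib[of "\<lambda>t. _ * t"] cong: if_cong)
  have E_eq: "(\<chi> k. if k = a then row a (mat 1) + x else row k (mat 1)) = E"
    unfolding E_def by (auto simp: vec_eq_iff row_def mat_def xj)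
  have detE1: "det E = 1"
    using det_row_span[OF xs] unfolding E_eq by simp
  have ME: "(M ** E) $ k $ j = M $ k $ j - M $ k $ a * w j" for k j
    unfolding matrix_matrix_mult_def E_def
    by (simp add: right_diff_distrib sum_subtractf sum_delta_mult if_distrib[of "\<lambda>t. _ * t"] cong: if_cong)
  have D0: "(transpose E ** P) $ i $ j = P $ i $ j - w i * P $ a $ j" for i j and P :: "real^'k^'k"
    unfolding matrix_matrix_mult_def E_def transpose_def
    by (simp add: left_diff_distrib sum_subtractf if_distrib[of "\<lambda>t. t * _"] sum.delta cong: if_cong)
  have D: "(transpose E ** (M ** E)) $ i $ j = (M ** E) $ i $ j - w i * (M ** E) $ a $ j" for i j
    by (rule D0)
  have Deq: "transpose E ** (M ** E) = (\<chi> i. if i = a then A a a *s row a N else row i N)"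
  proof -
    have "(transpose E ** (M ** E)) $ i $ j = (if i = a then A a a * N $ a $ j else N $ i $ j)" for i j
    proof -
      have wa: "w a = 0" using a by (simp add: w_def)
      consider "i = a" | "i \<in> J" | "i \<notin> insert a J" by auto
      then show ?thesis
      proof cases
        case 1
        then show ?thesis unfolding D ME using a aa
          by (cases "j \<in> J") (auto simp: M_def N_def embM_def w_def)
      next
        case 2
        then have ia: "i \<noteq> a" using a by auto
        have s1: "A i a = A a i" using sym[of i a] 2 by simp
        show ?thesis
        proof (cases "j \<in> J")
          case True
          then have ja: "j \<noteq> a" using a by auto
          show ?thesis unfolding D ME using 2 True ia ja aa
            by (simp add: M_def N_def embM_def w_def S_def s1 field_simps)
        next
          case False
          then show ?thesis unfolding D ME using 2 ia aa
            by (auto simp: M_def N_def embM_def w_def S_def s1)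
        qed
      next
        case 3
        then show ?thesis unfolding D ME using a
          by (auto simp: M_def N_def embM_def w_def)
      qed
    qed
    then show ?thesis by (simp add: vec_eq_iff row_def)
  qed
  have "det (transpose E ** (M ** E)) = det M"
    by (simp add: det_mul detE1)
  also have "det (transpose E ** (M ** E)) = A a a * det (\<chi> i. if i = a then row a N else row i N)"
    unfolding Deq by (rule det_row_mul)
  also have "(\<chi> i. if i = a then row a N else row i N) = N"
    by (simp add: vec_eq_iff row_def)
  finally show ?thesis unfolding detE_def M_def N_def S_def by simp
qed


lemma qf_delta:
  assumes "a \<in> J" "finite J"
  shows "qf J A (\<lambda>i. if i = a then 1 else 0) = A a a"
proof -
  have inner: "(\<Sum>j\<in>J. (if i = a then 1 else 0) * A i j * (if j = a then 1 else 0)) = (if i = a then A a a else 0)" for i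
  proof -
    have "(\<Sum>j\<in>J. (if i = a then 1 else 0) * A i j * (if j = a then 1 else 0)) = (\<Sum>j\<in>J. if j = a then (if i = a then A a a else 0) else 0)"
      by (intro sum.cong refl) auto
    also have "\<dots> = (if i = a then A a a else 0)" using assms by (simp add: sum.delta)
    finally show ?thesis .
  qed
  show ?thesis unfolding qf_def inner using assms by (simp add: sum.delta)
qed

lemma qf_insert_upd:
  assumes a: "a \<notin> F" and fin: "finite F" and sym: "\<And>j. j \<in> F \<Longrightarrow> A j a = A a j"
  shows "qf (insert a F) A (x(a := t)) = A a a * t\<^sup>2 + 2 * t * (\<Sum>j\<in>F. A a j * x j) + qf F A x"
proof -
  have x: "(x(a := t)) j = x j" if "j \<in> F" for j using a that by auto
  have ne1: "(j = a) = False" "(a = j) = False" if "j \<in> F" for j using a that by auto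
  have "qf (insert a F) A (x(a := t)) = (t * A a a * t + (\<Sum>j\<in>F. t * A a j * x j)) +
      (\<Sum>i\<in>F. x i * A i a * t + (\<Sum>j\<in>F. x i * A i j * x j))"
    unfolding qf_def using a fin by (simp add: ne1 cong: sum.cong)
  also have "(\<Sum>i\<in>F. x i * A i a * t + (\<Sum>j\<in>F. x i * A i j * x j)) = (\<Sum>i\<in>F. t * A a i * x i) + qf F A x"
    unfolding qf_def by (simp add: sum.distrib sym mult_ac cong: sum.cong)
  finally show ?thesis by (simp add: power2_eq_square sum_distrib_left algebra_simps fun_upd_def)
qed

lemma qf_schur:
  assumes sym: "\<And>j. j \<in> F \<Longrightarrow> A j a = A a j"
  shows "qf F (\<lambda>i j. A i j - A i a * A a j / A a a) x = qf F A x - (\<Sum>j\<in>F. A a j * x j)\<^sup>2 / A a a"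
proof -
  have "(\<Sum>j\<in>F. A a j * x j)\<^sup>2 = (\<Sum>i\<in>F. \<Sum>j\<in>F. (A a i * x i) * (A a j * x j))"
    by (simp add: power2_eq_square sum_product)
  also have "\<dots> = (\<Sum>i\<in>F. \<Sum>j\<in>F. x i * (A i a * A a j) * x j)"
    by (intro sum.cong refl) (simp add: sym)
  finally have *: "(\<Sum>j\<in>F. A a j * x j)\<^sup>2 / A a a = (\<Sum>i\<in>F. \<Sum>j\<in>F. x i * (A i a * A a j / A a a) * x j)"
    by (simp add: sum_divide_distrib)
  show ?thesis unfolding qf_def * by (simp add: right_diff_distrib left_diff_distrib sum_subtractf)
qed

lemma detE_empty: "detE {} A = 1"
proof -
  have "embM {} A = mat 1" by (simp add: embM_def mat_def vec_eq_iff)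
  then show ?thesis by (simp add: detE_def)
qed

lemma gaussJ:
  fixes J :: "'k::finite set" and A :: "'k \<Rightarrow> 'k \<Rightarrow> real"
  assumes "posdefJ J A"
  shows "(\<integral>\<^sup>+y. ennreal (exp (- qf J A y / 2)) \<partial>PiM J (\<lambda>_. lborel)) = ennreal ((2*pi) powr (card J / 2) / sqrt (detE J A)) \<and> detE J A > 0"
proof -
  have "finite J" by simp
  then show ?thesis using assms
  proof (induction J arbitrary: A rule: finite_induct)
    case empty
    show ?case by (simp add: PiM_empty nn_integral_count_space_finite detE_empty qf_def)
  next
    case (insert a F A)
    interpret product_sigma_finite "\<lambda>_. lborel" by standard
    have symA: "\<And>i j. i \<in> insert a F \<Longrightarrow> j \<in> insert a F \<Longrightarrow> A i j = A j i"
      using insert.prems by (auto simp: posdefJ_def)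
    have posA: "0 < qf (insert a F) A y" if "\<exists>i\<in>insert a F. y i \<noteq> 0" for y
      using insert.prems that by (auto simp: posdefJ_def)
    have syma: "\<And>j. j \<in> F \<Longrightarrow> A j a = A a j" using symA by auto
    have Aaa: "A a a > 0"
      using posA[of "\<lambda>i. if i = a then 1 else 0"] qf_delta[of a "insert a F" A] insert.hyps by auto
    define S where "S = (\<lambda>i j. A i j - A i a * A a j / A a a)"
    define b where "b = (\<lambda>x. \<Sum>j\<in>F. A a j * x j)"
    have Sq: "qf F S x = qf F A x - (b x)\<^sup>2 / A a a" for x
      unfolding S_def b_def by (rule qf_schur) (rule syma)
    have expand: "qf (insert a F) A (x(a := t)) = A a a * t\<^sup>2 + 2 * t * b x + qf F A x" for x t
      unfolding b_def by (rule qf_insert_upd) (use insert.hyps syma in auto)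
    have posS: "posdefJ F S"
      unfolding posdefJ_def
    proof safe
      fix i j assume "i \<in> F" "j \<in> F"
      then show "S i j = S j i" unfolding S_def using symA[of i j] symA[of i a] symA[of j a] by auto
    next
      fix y :: "'k \<Rightarrow> real" and i assume i: "i \<in> F" "y i \<noteq> 0"
      define t where "t = - b y / A a a"
      have "0 < qf (insert a F) A (y(a := t))"
        using i insert.hyps by (intro posA) (auto intro!: bexI[of _ i])
      also have "qf (insert a F) A (y(a := t)) = qf F S y"
        unfolding expand Sq t_def using Aaa by (simp add: field_simps power2_eq_square)
      finally show "0 < qf F S y" .
    qed
    note IH = insert.IH[OF posS]
    have detI: "detE (insert a F) A = A a a * detE F S"
      unfolding S_def by (rule detE_insert) (use insert.hyps symA Aaa in auto)
    have "(\<integral>\<^sup>+y. ennreal (exp (- qf (insert a F) A y / 2)) \<partial>PiM (insert a F) (\<lambda>_. lborel))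
        = (\<integral>\<^sup>+x. (\<integral>\<^sup>+t. ennreal (exp (- qf (insert a F) A (x(a := t)) / 2)) \<partial>lborel) \<partial>PiM F (\<lambda>_. lborel))"
      using insert.hyps by (subst product_nn_integral_insert) auto
    also have "\<dots> = (\<integral>\<^sup>+x. ennreal (sqrt (2*pi/A a a)) * ennreal (exp (- qf F S x / 2)) \<partial>PiM F (\<lambda>_. lborel))"
    proof (rule nn_integral_cong)
      fix x
      have "(\<integral>\<^sup>+t. ennreal (exp (- qf (insert a F) A (x(a := t)) / 2)) \<partial>lborel)
          = (\<integral>\<^sup>+t. ennreal (exp (- qf F A x / 2)) * ennreal (exp (-(A a a * t\<^sup>2 + 2 * b x * t)/2)) \<partial>lborel)"
        by (intro nn_integral_cong) (simp add: expand ennreal_mult[symmetric] exp_add[symmetric] field_simps)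
      also have "\<dots> = ennreal (exp (- qf F A x / 2)) * (\<integral>\<^sup>+t. ennreal (exp (-(A a a * t\<^sup>2 + 2 * b x * t)/2)) \<partial>lborel)"
        by (rule nn_integral_cmult) simp
      also have "\<dots> = ennreal (exp (- qf F A x / 2)) * ennreal (sqrt (2*pi/A a a) * exp ((b x)\<^sup>2/(2*A a a)))"
        by (simp only: gauss1_nn[OF Aaa])
      also have "\<dots> = ennreal (sqrt (2*pi/A a a)) * ennreal (exp (- qf F S x / 2))"
        using Aaa by (simp add: ennreal_mult[symmetric] exp_add[symmetric] Sq field_simps)
      finally show "(\<integral>\<^sup>+t. ennreal (exp (- qf (insert a F) A (x(a := t)) / 2)) \<partial>lborel)
          = ennreal (sqrt (2*pi/A a a)) * ennreal (exp (- qf F S x / 2))" .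
    qed
    also have "\<dots> = ennreal (sqrt (2*pi/A a a)) * (\<integral>\<^sup>+x. ennreal (exp (- qf F S x / 2)) \<partial>PiM F (\<lambda>_. lborel))"
      using insert.hyps by (intro nn_integral_cmult) auto
    also have "\<dots> = ennreal (sqrt (2*pi/A a a) * ((2*pi) powr (card F / 2) / sqrt (detE F S)))"
      using IH Aaa by (simp add: ennreal_mult[symmetric])
    also have "sqrt (2*pi/A a a) * ((2*pi) powr (card F / 2) / sqrt (detE F S)) = (2*pi) powr (card (insert a F) / 2) / sqrt (detE (insert a F) A)"
    proof -
      have "(2*pi) powr (card (insert a F) / 2) = (2*pi) powr (1/2) * (2*pi) powr (card F / 2)"
        using insert.hyps by (simp add: powr_add[symmetric] add_divide_distrib)
      also have "(2*pi) powr (1/2) = sqrt (2*pi)" by (simp add: powr_half_sqrt)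
      finally show ?thesis unfolding detI using Aaa IH
        by (simp add: real_sqrt_mult real_sqrt_divide field_simps)
    qed
    finally show ?case using detI Aaa IH by simp
  qed
qed



lemma nn_scale_PiM:
  fixes J :: "'i set" and f :: "('i \<Rightarrow> real) \<Rightarrow> ennreal"
  assumes fin: "finite J" and r: "r > 0" and f: "f \<in> borel_measurable (PiM J (\<lambda>_. lborel))"
  shows "(\<integral>\<^sup>+x. f x \<partial>PiM J (\<lambda>_. lborel)) = ennreal (r ^ card J) * (\<integral>\<^sup>+y. f (\<lambda>j\<in>J. c j + r * y j) \<partial>PiM J (\<lambda>_. lborel))"
  using fin f
proof (induction J arbitrary: f rule: finite_induct)
  case empty
  have "(\<lambda>j\<in>{}. c j + r * y j) = (\<lambda>_. undefined)" for y :: "'i \<Rightarrow> real" by auto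
  then show ?case by (simp add: PiM_empty nn_integral_count_space_finite)
next
  case (insert a F f)
  interpret product_sigma_finite "\<lambda>_. lborel" by standard
  note f[measurable] = insert.prems
  define g where "g = (\<lambda>x. \<integral>\<^sup>+t. f (x(a := c a + r * t)) \<partial>lborel)"
  have g_meas[measurable]: "g \<in> borel_measurable (PiM F (\<lambda>_. lborel))"
    unfolding g_def using insert.hyps by measurable
  have "(\<integral>\<^sup>+x. f x \<partial>PiM (insert a F) (\<lambda>_. lborel)) = (\<integral>\<^sup>+x. (\<integral>\<^sup>+t. f (x(a := (t::real))) \<partial>lborel) \<partial>PiM F (\<lambda>_. lborel))"
    using insert.hyps by (subst product_nn_integral_insert) auto
  also have "\<dots> = (\<integral>\<^sup>+x. ennreal r * g x \<partial>PiM F (\<lambda>_. lborel))"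
  proof (rule nn_integral_cong)
    fix x :: "'i \<Rightarrow> real" assume x: "x \<in> space (PiM F (\<lambda>_. lborel))"
    have "(\<lambda>v. x(a := v)) \<in> measurable lborel (PiM (insert a F) (\<lambda>_. lborel))"
      by (rule measurable_component_update[OF x \<open>a \<notin> F\<close>])
    then have m0: "(\<lambda>t. f (x(a := (t::real)))) \<in> borel_measurable lborel"
      by (rule measurable_compose) (rule f)
    then have m: "(\<lambda>t. f (x(a := (t::real)))) \<in> borel_measurable borel"
      by simp
    show "(\<integral>\<^sup>+t. f (x(a := (t::real))) \<partial>lborel) = ennreal r * g x"
      unfolding g_def using nn_integral_real_affine[OF m, of r "c a"] r by simp
  qed
  also have "\<dots> = ennreal r * (\<integral>\<^sup>+x. g x \<partial>PiM F (\<lambda>_. lborel))"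
    by (rule nn_integral_cmult) simp
  also have "(\<integral>\<^sup>+x. g x \<partial>PiM F (\<lambda>_. lborel)) = ennreal (r ^ card F) * (\<integral>\<^sup>+y. g (\<lambda>j\<in>F. c j + r * y j) \<partial>PiM F (\<lambda>_. lborel))"
    by (rule insert.IH) simp
  also have "(\<integral>\<^sup>+y. g (\<lambda>j\<in>F. c j + r * y j) \<partial>PiM F (\<lambda>_. lborel)) = (\<integral>\<^sup>+y. f (\<lambda>j\<in>insert a F. c j + r * y j) \<partial>PiM (insert a F) (\<lambda>_. lborel))"
  proof -
    have "(\<integral>\<^sup>+y. f (\<lambda>j\<in>insert a F. c j + r * y j) \<partial>PiM (insert a F) (\<lambda>_. lborel))
        = (\<integral>\<^sup>+y. (\<integral>\<^sup>+t. f (\<lambda>j\<in>insert a F. c j + r * (y(a := t)) j) \<partial>lborel) \<partial>PiM F (\<lambda>_. lborel))"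
      using insert.hyps by (subst product_nn_integral_insert) auto
    also have "\<dots> = (\<integral>\<^sup>+y. g (\<lambda>j\<in>F. c j + r * y j) \<partial>PiM F (\<lambda>_. lborel))"
    proof (rule nn_integral_cong)
      fix y :: "'i \<Rightarrow> real"
      have "(\<lambda>j\<in>insert a F. c j + r * (y(a := t)) j) = (\<lambda>j\<in>F. c j + r * y j)(a := c a + r * t)" for t
        using insert.hyps by (auto simp: fun_eq_iff)
      then show "(\<integral>\<^sup>+t. f (\<lambda>j\<in>insert a F. c j + r * (y(a := t)) j) \<partial>lborel) = g (\<lambda>j\<in>F. c j + r * y j)"
        unfolding g_def by simp
    qed
    finally show ?thesis by simp
  qed
  finally have "(\<integral>\<^sup>+x. f x \<partial>PiM (insert a F) (\<lambda>_. lborel)) = (ennreal r * ennreal (r ^ card F)) * (\<integral>\<^sup>+y. f (\<lambda>j\<in>insert a F. c j + r * y j) \<partial>PiM (insert a F) (\<lambda>_. lborel))"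
    by (simp add: mult.assoc)
  also have "ennreal r * ennreal (r ^ card F) = ennreal (r ^ card (insert a F))"
    using insert.hyps r by (simp add: ennreal_mult[symmetric])
  finally show ?case .
qed


lemma int_scale_PiM:
  fixes J :: "'i set" and g :: "('i \<Rightarrow> real) \<Rightarrow> real"
  assumes fin: "finite J" and r: "r > 0" and g[measurable]: "g \<in> borel_measurable (PiM J (\<lambda>_. lborel))"
    and nn: "\<And>x. 0 \<le> g x"
  shows "(\<integral>x. g x \<partial>PiM J (\<lambda>_. lborel)) = r ^ card J * (\<integral>y. g (\<lambda>j\<in>J. c j + r * y j) \<partial>PiM J (\<lambda>_. lborel))"
proof -
  have "(\<integral>x. g x \<partial>PiM J (\<lambda>_. lborel)) = enn2real (\<integral>\<^sup>+x. ennreal (g x) \<partial>PiM J (\<lambda>_. lborel))"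
    using nn by (intro integral_eq_nn_integral) auto
  also have "(\<integral>\<^sup>+x. ennreal (g x) \<partial>PiM J (\<lambda>_. lborel)) = ennreal (r ^ card J) * (\<integral>\<^sup>+y. ennreal (g (\<lambda>j\<in>J. c j + r * y j)) \<partial>PiM J (\<lambda>_. lborel))"
    by (rule nn_scale_PiM[OF fin r]) measurable
  also have "enn2real \<dots> = r ^ card J * enn2real (\<integral>\<^sup>+y. ennreal (g (\<lambda>j\<in>J. c j + r * y j)) \<partial>PiM J (\<lambda>_. lborel))"
    using r by (simp add: enn2real_mult)
  also have "enn2real (\<integral>\<^sup>+y. ennreal (g (\<lambda>j\<in>J. c j + r * y j)) \<partial>PiM J (\<lambda>_. lborel)) = (\<integral>y. g (\<lambda>j\<in>J. c j + r * y j) \<partial>PiM J (\<lambda>_. lborel))"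
    using nn by (intro integral_eq_nn_integral[symmetric]) auto
  finally show ?thesis .
qed

lemma integrable_gauss_PiM:
  fixes J :: "'i set" and c :: real
  assumes fin: "finite J" and c: "c > 0"
  shows "integrable (PiM J (\<lambda>_. lborel)) (\<lambda>y::'i \<Rightarrow> real. exp (- c * (\<Sum>j\<in>J. (y j)\<^sup>2)))"
proof -
  interpret product_sigma_finite "\<lambda>_. lborel" by standard
  have i1: "integrable lborel (\<lambda>t. exp (- c * t\<^sup>2))"
  proof (rule Bochner_Integration.integrableI_nonneg)
    have "(\<integral>\<^sup>+t. ennreal (exp (- c * t\<^sup>2)) \<partial>lborel) = (\<integral>\<^sup>+t. ennreal (exp (-((2*c)*t\<^sup>2 + 2*0*t)/2)) \<partial>lborel)"
      by (intro nn_integral_cong) simp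
    also have "\<dots> = ennreal (sqrt (2*pi/(2*c)) * exp (0\<^sup>2/(2*(2*c))))"
      by (rule gauss1_nn) (use c in simp)
    finally show "(\<integral>\<^sup>+t. ennreal (exp (- c * t\<^sup>2)) \<partial>lborel) < \<infinity>" by simp
  qed auto
  have "integrable (PiM J (\<lambda>_. lborel)) (\<lambda>y. \<Prod>j\<in>J. exp (- c * (y j)\<^sup>2))"
    by (rule product_integrable_prod) (use fin i1 in auto)
  moreover have "(\<Prod>j\<in>J. exp (- c * (y j)\<^sup>2)) = exp (- c * (\<Sum>j\<in>J. (y j)\<^sup>2))" for y
    using fin by (simp add: exp_sum sum_distrib_left)
  ultimately show ?thesis by simp
qed

lemma laplace:
  fixes J :: "'i set" and w E q :: "('i \<Rightarrow> real) \<Rightarrow> real" and x0 :: "'i \<Rightarrow> real"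
  assumes fin: "finite J"
  and wm[measurable]: "w \<in> borel_measurable (PiM J (\<lambda>_. lborel))"
  and Em[measurable]: "E \<in> borel_measurable (PiM J (\<lambda>_. lborel))"
  and qm[measurable]: "q \<in> borel_measurable (PiM J (\<lambda>_. lborel))"
  and w_nn: "\<And>x. 0 \<le> w x" and int_w: "integrable (PiM J (\<lambda>_. lborel)) w"
  and E_nn: "\<And>x. 0 \<le> E x"
  and c: "c > 0"
  and E_bound: "\<And>x. x \<in> space (PiM J (\<lambda>_. lborel)) \<Longrightarrow> w x \<noteq> 0 \<Longrightarrow> E x \<le> exp (- c * (\<Sum>j\<in>J. (x j - x0 j)\<^sup>2))"
  and \<delta>: "\<delta> > 0"
  and w_loc: "\<And>x. x \<in> space (PiM J (\<lambda>_. lborel)) \<Longrightarrow> (\<Sum>j\<in>J. (x j - x0 j)\<^sup>2) < \<delta> \<Longrightarrow> w x \<le> W"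
  and lim: "\<And>y. y \<in> space (PiM J (\<lambda>_. lborel)) \<Longrightarrow>
     (\<lambda>n. E (\<lambda>j\<in>J. x0 j + y j / sqrt n) ^ n * w (\<lambda>j\<in>J. x0 j + y j / sqrt n)) \<longlonglongrightarrow> exp (- q y / 2) * w0"
  shows "(\<lambda>n. sqrt n ^ card J * (\<integral>x. E x ^ n * w x \<partial>PiM J (\<lambda>_. lborel))) \<longlonglongrightarrow> w0 * (\<integral>y. exp (- q y / 2) \<partial>PiM J (\<lambda>_. lborel))"
proof -
  let ?M = "PiM J (\<lambda>_. lborel :: real measure)"
  define m where "m = card J"
  define d where "d = (\<lambda>x. \<Sum>j\<in>J. (x j - x0 j)\<^sup>2)"
  have dm[measurable]: "d \<in> borel_measurable ?M" unfolding d_def using fin by measurable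
  have d_nn: "0 \<le> d x" for x unfolding d_def by (simp add: sum_nonneg)
  define near where "near = (\<lambda>n x. if d x < \<delta> then E x ^ n * w x else 0)"
  define far where "far = (\<lambda>n x. if d x < \<delta> then 0 else E x ^ n * w x)"
  have near_m[measurable]: "near n \<in> borel_measurable ?M" for n unfolding near_def by measurable
  have far_m[measurable]: "far n \<in> borel_measurable ?M" for n unfolding far_def by measurable
  have E1: "E x ^ n \<le> 1" if "x \<in> space ?M" "w x \<noteq> 0" for x n
  proof -
    have "E x \<le> exp (- c * d x)" using E_bound that unfolding d_def by auto
    also have "\<dots> \<le> 1" using c d_nn[of x] by (simp add: mult_nonneg_nonneg)
    finally show ?thesis using E_nn by (simp add: power_le_one)
  qed
  have bw: "E x ^ n * w x \<le> w x" if "x \<in> space ?M" for x n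
    using E1[OF that, of n] w_nn[of x] by (cases "w x = 0") (auto simp: mult_left_le_one_le)
  have int_n: "integrable ?M (\<lambda>x. E x ^ n * w x)" for n
    by (rule Bochner_Integration.integrable_bound[OF int_w]) (use bw w_nn E_nn in \<open>auto intro!: AE_I2 simp: zero_le_power\<close>)
  have int_near: "integrable ?M (near n)" for n
    by (rule Bochner_Integration.integrable_bound[OF int_w]) (use bw w_nn E_nn in \<open>auto intro!: AE_I2 simp: near_def zero_le_power\<close>)
  have int_far: "integrable ?M (far n)" for n
    by (rule Bochner_Integration.integrable_bound[OF int_w]) (use bw w_nn E_nn in \<open>auto intro!: AE_I2 simp: far_def zero_le_power\<close>)
  have split: "(\<integral>x. E x ^ n * w x \<partial>?M) = (\<integral>x. near n x \<partial>?M) + (\<integral>x. far n x \<partial>?M)" for n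
  proof -
    have "(\<integral>x. E x ^ n * w x \<partial>?M) = (\<integral>x. near n x + far n x \<partial>?M)"
      by (intro Bochner_Integration.integral_cong) (auto simp: near_def far_def)
    also have "\<dots> = (\<integral>x. near n x \<partial>?M) + (\<integral>x. far n x \<partial>?M)"
      by (rule Bochner_Integration.integral_add[OF int_near int_far])
    finally show ?thesis .
  qed
  define e where "e = c * \<delta>"
  have e: "e > 0" unfolding e_def using c \<delta> by simp
  have far_le: "(\<integral>x. far n x \<partial>?M) \<le> exp (- e * n) * (\<integral>x. w x \<partial>?M)" for n
  proof -
    have "(\<integral>x. far n x \<partial>?M) \<le> (\<integral>x. exp (- e * n) * w x \<partial>?M)"
    proof (rule integral_mono[OF int_far])
      show "integrable ?M (\<lambda>x. exp (- e * n) * w x)" using int_w by simp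
      fix x assume x: "x \<in> space ?M"
      show "far n x \<le> exp (- e * n) * w x"
      proof (cases "d x < \<delta> \<or> w x = 0")
        case True then show ?thesis using w_nn[of x] by (auto simp: far_def)
      next
        case False
        then have "E x \<le> exp (- c * d x)" using E_bound x unfolding d_def by auto
        also have "\<dots> \<le> exp (- c * \<delta>)" using False c by simp
        finally have "E x ^ n \<le> exp (- c * \<delta>) ^ n" using E_nn by (intro power_mono) auto
        also have "\<dots> = exp (- e * n)" unfolding e_def by (simp add: exp_of_nat_mult[symmetric] mult_ac)
        finally show ?thesis using False w_nn[of x] by (auto simp: far_def intro: mult_right_mono)
      qed
    qed
    also have "\<dots> = exp (- e * n) * (\<integral>x. w x \<partial>?M)" by simp
    finally show ?thesis .
  qed
  have far_nn: "0 \<le> (\<integral>x. far n x \<partial>?M)" for n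
    by (intro Bochner_Integration.integral_nonneg) (auto simp: far_def w_nn E_nn)
  have far_lim: "(\<lambda>n. sqrt n ^ m * (\<integral>x. far n x \<partial>?M)) \<longlonglongrightarrow> 0"
  proof (rule tendsto_sandwich)
    show "\<forall>\<^sub>F n in sequentially. 0 \<le> sqrt n ^ m * (\<integral>x. far n x \<partial>?M)"
      using far_nn by (auto intro!: always_eventually)
    show "\<forall>\<^sub>F n in sequentially. sqrt n ^ m * (\<integral>x. far n x \<partial>?M) \<le> (sqrt n ^ m * exp (- e * n)) * (\<integral>x. w x \<partial>?M)"
      using far_le by (auto intro!: always_eventually mult_left_mono simp: mult.assoc)
    have "(\<lambda>n::nat. sqrt (real n) ^ m * exp (- e * real n)) \<longlonglongrightarrow> 0"
      using e by real_asymp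
    then show "(\<lambda>n. (sqrt n ^ m * exp (- e * n)) * (\<integral>x. w x \<partial>?M)) \<longlonglongrightarrow> 0"
      by (rule tendsto_mult_left_zero)
  qed simp
  define sh where "sh = (\<lambda>(n::nat) y. \<lambda>j\<in>J. x0 j + (1 / sqrt (Suc n)) * y j)"
  have sh_sp: "sh n y \<in> space ?M" for n y unfolding sh_def by (simp add: space_PiM)
  have sh_m[measurable]: "sh n \<in> measurable ?M ?M" for n unfolding sh_def by measurable
  have d_sh: "d (sh n y) = (\<Sum>j\<in>J. (y j)\<^sup>2) / Suc n" for n y
    unfolding d_def sh_def by (simp add: sum_divide_distrib power_mult_distrib power_divide)
  have near_scaled: "sqrt (Suc n) ^ m * (\<integral>x. near (Suc n) x \<partial>?M) = (\<integral>y. near (Suc n) (sh n y) \<partial>?M)" for n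
  proof -
    have "(\<integral>x. near (Suc n) x \<partial>?M) = (1 / sqrt (Suc n)) ^ m * (\<integral>y. near (Suc n) (sh n y) \<partial>?M)"
      unfolding m_def sh_def
      by (rule int_scale_PiM[OF fin]) (auto simp: near_def w_nn E_nn)
    then show ?thesis by (simp add: power_one_over)
  qed
  define W' where "W' = max W 0"
  have near_lim: "(\<lambda>n. (\<integral>y. near (Suc n) (sh n y) \<partial>?M)) \<longlonglongrightarrow> (\<integral>y. exp (- q y / 2) * w0 \<partial>?M)"
  proof (rule integral_dominated_convergence[where w = "\<lambda>y. W' * exp (- c * (\<Sum>j\<in>J. (y j)\<^sup>2))"])
    show "(\<lambda>y. exp (- q y / 2) * w0) \<in> borel_measurable ?M" by measurable
    show "(\<lambda>y. near (Suc n) (sh n y)) \<in> borel_measurable ?M" for n by measurable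
    show "integrable ?M (\<lambda>y. W' * exp (- c * (\<Sum>j\<in>J. (y j)\<^sup>2)))"
      using integrable_gauss_PiM[OF fin c] by simp
    show "AE y in ?M. (\<lambda>n. near (Suc n) (sh n y)) \<longlonglongrightarrow> exp (- q y / 2) * w0"
    proof (rule AE_I2)
      fix y assume y: "y \<in> space ?M"
      have L: "(\<lambda>n. E (sh n y) ^ Suc n * w (sh n y)) \<longlonglongrightarrow> exp (- q y / 2) * w0"
      proof -
        have "(\<lambda>n. E (\<lambda>j\<in>J. x0 j + y j / sqrt (Suc n)) ^ Suc n * w (\<lambda>j\<in>J. x0 j + y j / sqrt (Suc n))) \<longlonglongrightarrow> exp (- q y / 2) * w0"
          using LIMSEQ_Suc[OF lim[OF y]] by simp
        moreover have "(\<lambda>j\<in>J. x0 j + y j / sqrt (Suc n)) = sh n y" for n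
          unfolding sh_def by (simp add: fun_eq_iff)
        ultimately show ?thesis by simp
      qed
      have S0: "(\<lambda>n. S / real (Suc n)) \<longlonglongrightarrow> 0" for S :: real by real_asymp
      have "(\<lambda>n. (\<Sum>j\<in>J. (y j)\<^sup>2) / real (Suc n)) \<longlonglongrightarrow> 0" by (rule S0)
      then have "\<forall>\<^sub>F n in sequentially. (\<Sum>j\<in>J. (y j)\<^sup>2) / real (Suc n) < \<delta>"
        using \<delta> by (rule order_tendstoD)
      then have ev: "\<forall>\<^sub>F n in sequentially. near (Suc n) (sh n y) = E (sh n y) ^ Suc n * w (sh n y)"
        by eventually_elim (simp add: near_def d_sh)
      show "(\<lambda>n. near (Suc n) (sh n y)) \<longlonglongrightarrow> exp (- q y / 2) * w0"
        by (subst tendsto_cong[OF ev]) (rule L)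
    qed
    fix n
    show "AE y in ?M. norm (near (Suc n) (sh n y)) \<le> W' * exp (- c * (\<Sum>j\<in>J. (y j)\<^sup>2))"
    proof (rule AE_I2)
      fix y assume y: "y \<in> space ?M"
      let ?z = "sh n y"
      show "norm (near (Suc n) ?z) \<le> W' * exp (- c * (\<Sum>j\<in>J. (y j)\<^sup>2))"
      proof (cases "d ?z < \<delta> \<and> w ?z \<noteq> 0")
        case False
        then have "near (Suc n) ?z = 0" by (auto simp: near_def)
        then show ?thesis by (simp add: W'_def)
      next
        case True
        have "E ?z \<le> exp (- c * d ?z)" using E_bound sh_sp True unfolding d_def by auto
        then have "E ?z ^ Suc n \<le> exp (- c * d ?z) ^ Suc n" using E_nn by (intro power_mono) auto
        also have "\<dots> = exp (real (Suc n) * (- c * d ?z))"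
          by (rule exp_of_nat_mult[symmetric])
        also have "\<dots> = exp (- c * (\<Sum>j\<in>J. (y j)\<^sup>2))"
          unfolding d_sh by (simp del: of_nat_Suc)
        finally have e1: "E ?z ^ Suc n \<le> exp (- c * (\<Sum>j\<in>J. (y j)\<^sup>2))" .
        have "w ?z \<le> W" using w_loc[OF sh_sp] True unfolding d_def by auto
        then have w1: "w ?z \<le> W'" unfolding W'_def by linarith
        have "near (Suc n) ?z = E ?z ^ Suc n * w ?z" using True by (simp add: near_def)
        also have "\<dots> \<le> exp (- c * (\<Sum>j\<in>J. (y j)\<^sup>2)) * W'"
          by (rule mult_mono[OF e1 w1]) (auto simp: W'_def w_nn)
        finally show ?thesis using E_nn w_nn by (simp add: near_def mult.commute zero_le_power)
      qed
    qed
  qed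
  then have near_lim': "(\<lambda>n. sqrt n ^ m * (\<integral>x. near n x \<partial>?M)) \<longlonglongrightarrow> w0 * (\<integral>y. exp (- q y / 2) \<partial>?M)"
    unfolding near_scaled[symmetric] by (subst filterlim_sequentially_Suc[symmetric]) (simp add: mult.commute)
  have "(\<lambda>n. sqrt n ^ m * (\<integral>x. near n x \<partial>?M) + sqrt n ^ m * (\<integral>x. far n x \<partial>?M)) \<longlonglongrightarrow> w0 * (\<integral>y. exp (- q y / 2) \<partial>?M) + 0"
    by (rule tendsto_add[OF near_lim' far_lim])
  then show ?thesis unfolding m_def[symmetric] split by (simp add: distrib_left)
qed



definition psi :: "real \<Rightarrow> real" where "psi t = ln (1 + t) - t"

lemma psi_le:
  fixes t U :: real assumes U: "0 \<le> U" and t: "-1 < t" "t \<le> U"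
  shows "psi t \<le> - t\<^sup>2 / (2 * (1 + U))"
proof -
  define h where "h = (\<lambda>x::real. ln (1 + x) - x + x\<^sup>2 / (2 * (1 + U)))"
  have D: "(h has_real_derivative (x * (1/(1+U) - 1/(1+x)))) (at x)" if "-1 < x" for x
  proof -
    have d1: "((\<lambda>x. ln (1 + x)) has_real_derivative 1/(1+x)) (at x)"
      using that by (auto intro!: derivative_eq_intros simp: divide_inverse)
    have d2: "((\<lambda>x::real. x\<^sup>2 / (2 * (1 + U))) has_real_derivative 2 * x / (2 * (1 + U))) (at x)"
      using U by (auto intro!: derivative_eq_intros)
    have "(h has_real_derivative (1/(1+x) - 1 + 2 * x / (2 * (1 + U)))) (at x)"
      unfolding h_def by (intro DERIV_add DERIV_diff d1 d2 DERIV_ident)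
    moreover have "1/(1+x) - 1 + 2 * x / (2 * (1 + U)) = x * (1/(1+U) - 1/(1+x))"
    proof -
      have a1: "1/(1+x) - 1 = - x/(1+x)" using that by (simp add: field_simps)
      have a2: "2 * x / (2 * (1 + U)) = x/(1+U)" by (rule mult_divide_mult_cancel_left) simp
      show ?thesis unfolding a1 a2 by (simp add: right_diff_distrib)
    qed
    ultimately show ?thesis by simp
  qed
  have "h t \<le> h 0"
  proof (cases "t \<ge> 0")
    case True
    have "(\<lambda>x. - h x) 0 \<le> (\<lambda>x. - h x) t"
    proof (rule DERIV_nonneg_imp_nondecreasing[OF True])
      fix x :: real assume x: "0 \<le> x" "x \<le> t"
      have "1/(1+U) \<le> 1/(1+x)" using x t U by (intro divide_left_mono) auto
      then have "x * (1/(1+U) - 1/(1+x)) \<le> 0"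
        using x by (intro mult_nonneg_nonpos) auto
      then show "\<exists>y. ((\<lambda>x. - h x) has_real_derivative y) (at x) \<and> 0 \<le> y"
        using DERIV_minus[OF D[of x]] x by (intro exI[of _ "- (x * (1/(1+U) - 1/(1+x)))"]) auto
    qed
    then show ?thesis by simp
  next
    case False
    show "h t \<le> h 0"
    proof (rule DERIV_nonneg_imp_nondecreasing[of t 0 h])
      show "t \<le> 0" using False by simp
      fix x :: real assume x: "t \<le> x" "x \<le> 0"
      have x1: "-1 < x" using x t by simp
      have "1/(1+U) \<le> 1/(1+x)" using x1 x U by (intro divide_left_mono) auto
      then have "0 \<le> x * (1/(1+U) - 1/(1+x))"
        using x by (intro mult_nonpos_nonpos) auto
      then show "\<exists>y. (h has_real_derivative y) (at x) \<and> 0 \<le> y"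
        using D[OF x1] by blast
    qed
  qed
  then show ?thesis unfolding h_def psi_def by simp
qed

lemma psi_lim: "(\<lambda>n::nat. real n * psi (a / sqrt (real n))) \<longlonglongrightarrow> - (a * a / 2)"
  unfolding psi_def by real_asymp

definition fb :: "real \<Rightarrow> real \<Rightarrow> real" where
  "fb a t = (if 0 \<le> t \<and> t \<le> 1 then t powr (a - 1) else 0)"

lemma fb_nn: "0 \<le> fb a t" by (simp add: fb_def)

lemma fb_meas[measurable]: "fb a \<in> borel_measurable borel"
  unfolding fb_def[abs_def] by measurable

lemma fb_nn_int:
  assumes a: "a > 0"
  shows "(\<integral>\<^sup>+t. ennreal (fb a t) \<partial>lborel) = ennreal (1 / a)"
proof -
  have hi: "((\<lambda>t. t powr (a - 1)) has_integral (1 powr (a - 1 + 1) / (a - 1 + 1))) {0..1}"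
    by (rule has_integral_powr_from_0) (use a in auto)
  have "(\<integral>\<^sup>+t. ennreal (t powr (a - 1)) * indicator {0..1} t \<partial>lborel) = ennreal (1 powr (a - 1 + 1) / (a - 1 + 1))"
    by (rule nn_integral_has_integral_lebesgue'[OF _ hi]) simp
  moreover have "ennreal (fb a t) = ennreal (t powr (a - 1)) * indicator {0..1} t" for t
    by (simp add: fb_def indicator_def)
  ultimately show ?thesis by simp
qed

lemma fb_int: "a > 0 \<Longrightarrow> integrable lborel (fb a)"
  by (rule Bochner_Integration.integrableI_nonneg) (auto simp: fb_nn fb_nn_int)

lemma det_scale_rows:
  fixes A :: "real^'n^'n"
  shows "det (\<chi> i j. d i * A $ i $ j) = (\<Prod>i\<in>UNIV. d i) * det A"
proof -
  have "(\<chi> i j. d i * A $ i $ j) = (\<chi> i j. if i = j then d i else 0) ** A"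
    by (simp add: vec_eq_iff matrix_matrix_mult_def if_distrib[of "\<lambda>t. t * _"] sum.delta cong: if_cong)
  then show ?thesis by (simp add: det_mul det_diagonal)
qed

lemma detE_scale:
  fixes A :: "'k::finite \<Rightarrow> 'k \<Rightarrow> real"
  shows "detE J (\<lambda>i j. c * A i j) = c ^ card J * detE J A"
proof -
  have "embM J (\<lambda>i j. c * A i j) = (\<chi> i j. (if i \<in> J then c else 1) * embM J A $ i $ j)"
    by (simp add: embM_def vec_eq_iff)
  moreover have "(\<Prod>i\<in>UNIV. if i \<in> J then c else 1) = c ^ card J"
    by (simp add: prod.If_cases)
  ultimately show ?thesis unfolding detE_def by (simp add: det_scale_rows)
qed

lemma qf_add: "qf J (\<lambda>i j. A i j + B i j) y = qf J A y + qf J B y"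
  unfolding qf_def by (simp add: distrib_left distrib_right sum.distrib)

lemma qf_scale: "qf J (\<lambda>i j. c * A i j) y = c * qf J A y"
  unfolding qf_def by (simp add: sum_distrib_left mult_ac)

lemma posdef_add: "posdefJ J A \<Longrightarrow> posdefJ J B \<Longrightarrow> posdefJ J (\<lambda>i j. A i j + B i j)"
  unfolding posdefJ_def by (auto simp: qf_add add_pos_pos)

lemma posdef_scale: "posdefJ J A \<Longrightarrow> c > 0 \<Longrightarrow> posdefJ J (\<lambda>i j. c * A i j)"
  unfolding posdefJ_def by (auto simp: qf_scale)

lemma gaussJ_int:
  fixes J :: "'k::finite set"
  assumes "posdefJ J A"
  shows "(\<integral>y. exp (- qf J A y / 2) \<partial>PiM J (\<lambda>_. lborel)) = (2*pi) powr (card J / 2) / sqrt (detE J A)"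
    and "detE J A > 0"
proof -
  note g = gaussJ[OF assms]
  have "(\<integral>y. exp (- qf J A y / 2) \<partial>PiM J (\<lambda>_. lborel)) = enn2real (\<integral>\<^sup>+y. ennreal (exp (- qf J A y / 2)) \<partial>PiM J (\<lambda>_. lborel))"
    by (rule integral_eq_nn_integral) auto
  also have "\<dots> = (2*pi) powr (card J / 2) / sqrt (detE J A)" using g by simp
  finally show "(\<integral>y. exp (- qf J A y / 2) \<partial>PiM J (\<lambda>_. lborel)) = (2*pi) powr (card J / 2) / sqrt (detE J A)" .
  show "detE J A > 0" using g by simp
qed

lemma ratio_scale:
  fixes k X Y Z :: real
  assumes "k > 0"
  shows "(k * X) / sqrt ((k * Y) * (k * Z)) = X / sqrt (Y * Z)"
proof -
  have "sqrt ((k * Y) * (k * Z)) = k * sqrt (Y * Z)"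
    using assms by (simp add: real_sqrt_mult mult_ac)
  then show ?thesis using assms by simp
qed

locale lda =
  fixes \<phi> :: "'k::finite \<Rightarrow> 'v::finite \<Rightarrow> real" and p :: "'v \<Rightarrow> real" and \<theta>s :: "'k \<Rightarrow> real" and \<alpha> :: "'k \<Rightarrow> real"
  assumes K2: "CARD('k) \<ge> 2"
    and phi_simplex: "\<And>k. (\<lambda>v. \<phi> k v) \<in> prob_simplex"
    and phi_pos: "\<And>k v. 0 < \<phi> k v"
    and p_simplex: "p \<in> prob_simplex"
    and ts_simplex: "\<theta>s \<in> prob_simplex"
    and ts_pos: "\<And>k. 0 < \<theta>s k"
    and unique_max: "\<And>\<theta>. \<theta> \<in> prob_simplex \<Longrightarrow> \<theta> \<noteq> \<theta>s \<Longrightarrow> lda_H \<phi> p \<theta> < lda_H \<phi> p \<theta>s"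
    and neg_def: "\<And>d :: 'k \<Rightarrow> real. (\<exists>k. d k \<noteq> 0) \<Longrightarrow> (\<Sum>k\<in>UNIV. d k) = 0 \<Longrightarrow>
                    (\<Sum>i\<in>UNIV. \<Sum>j\<in>UNIV. d i * hessian (lda_H \<phi> p) \<theta>s i j * d j) < 0"
    and alpha_pos: "\<And>k. 0 < \<alpha> k"
begin

definition s where "s v = (\<Sum>k\<in>UNIV. \<theta>s k * \<phi> k v)"
definition g where "g k = (\<Sum>v\<in>UNIV. p v * \<phi> k v / s v)"
definition Qm where "Qm i j = - (\<Sum>v\<in>UNIV. p v * \<phi> i v * \<phi> j v / (s v)\<^sup>2)"

lemma phi_sum: "(\<Sum>v\<in>UNIV. \<phi> k v) = 1"
  using phi_simplex[of k] by (simp add: prob_simplex_def)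

lemma phi_nn: "0 \<le> \<phi> k v" using phi_pos[of k v] by simp

lemma phi_le1: "\<phi> k v \<le> 1"
proof -
  have "\<phi> k v \<le> (\<Sum>v\<in>UNIV. \<phi> k v)" by (rule member_le_sum) (auto simp: phi_nn)
  then show ?thesis by (simp add: phi_sum)
qed

lemma p_nn: "0 \<le> p v" using p_simplex by (simp add: prob_simplex_def)
lemma p_sum: "(\<Sum>v\<in>UNIV. p v) = 1" using p_simplex by (simp add: prob_simplex_def)
lemma ts_sum: "(\<Sum>k\<in>UNIV. \<theta>s k) = 1" using ts_simplex by (simp add: prob_simplex_def)

lemma s_pos: "0 < s v"
  unfolding s_def by (rule sum_pos) (auto intro: mult_pos_pos ts_pos phi_pos)

lemma s_le1: "s v \<le> 1"
proof -
  have "s v \<le> (\<Sum>k\<in>UNIV. \<theta>s k * 1)" unfolding s_def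
    by (intro sum_mono mult_left_mono) (auto simp: phi_le1 less_imp_le[OF ts_pos])
  then show ?thesis by (simp add: ts_sum)
qed

lemma H_dir: "lda_H \<phi> p (\<lambda>k. \<theta>s k + t * e k) = (\<Sum>v\<in>UNIV. p v * ln (s v + t * (\<Sum>k\<in>UNIV. e k * \<phi> k v)))"
  unfolding lda_H_def s_def by (simp add: distrib_right sum.distrib sum_distrib_left mult.assoc)

lemma deriv_dir:
  assumes "\<And>v. 0 < a v + t * c v"
  shows "((\<lambda>t. \<Sum>v\<in>UNIV. p v * ln (a v + t * c v)) has_real_derivative (\<Sum>v\<in>UNIV. p v * (c v / (a v + t * c v)))) (at t)"
  by (rule DERIV_sum) (auto intro!: derivative_eq_intros simp: assms field_simps)

definition mu where "mu = Min (range \<theta>s)"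

lemma mu_pos: "0 < mu" and mu_le: "mu \<le> \<theta>s k"
  unfolding mu_def using ts_pos by auto

lemma g_const: "g i = g j"
proof -
  define e where "e = (\<lambda>k. (if k = i then 1 else 0) - (if k = j then 1 else 0 :: real))"
  define c where "c = (\<lambda>v. \<Sum>k\<in>UNIV. e k * \<phi> k v)"
  have c: "c v = \<phi> i v - \<phi> j v" for v
    unfolding c_def e_def by (simp add: left_diff_distrib sum_subtractf if_distrib[of "\<lambda>t. t * _"] cong: if_cong)
  have esum: "(\<Sum>k\<in>UNIV. e k) = 0" unfolding e_def by (simp add: sum_subtractf)
  have ebound: "\<bar>e k\<bar> \<le> 1" for k unfolding e_def by auto
  define h where "h = (\<lambda>t. \<Sum>v\<in>UNIV. p v * ln (s v + t * c v))"
  have hH: "h t = lda_H \<phi> p (\<lambda>k. \<theta>s k + t * e k)" for t unfolding h_def c_def by (simp add: H_dir)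
  have D: "(h has_real_derivative (\<Sum>v\<in>UNIV. p v * (c v / (s v + 0 * c v)))) (at 0)"
    unfolding h_def by (rule deriv_dir) (simp add: s_pos)
  have "(\<Sum>v\<in>UNIV. p v * (c v / (s v + 0 * c v))) = 0"
  proof (rule DERIV_local_max[OF D mu_pos], intro allI impI)
    fix t :: real assume t: "\<bar>0 - t\<bar> < mu"
    have mem: "(\<lambda>k. \<theta>s k + t * e k) \<in> prob_simplex"
    proof -
      have "0 \<le> \<theta>s k + t * e k" for k
      proof -
        have "\<bar>t\<bar> * \<bar>e k\<bar> \<le> \<bar>t\<bar> * 1" by (rule mult_left_mono) (auto simp: ebound)
        then have "\<bar>t * e k\<bar> \<le> \<bar>t\<bar>" by (simp add: abs_mult)
        then show ?thesis using t mu_le[of k] by linarith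
      qed
      moreover have "(\<Sum>k\<in>UNIV. \<theta>s k + t * e k) = 1"
        by (simp add: sum.distrib ts_sum sum_distrib_left[symmetric] esum)
      ultimately show ?thesis by (simp add: prob_simplex_def)
    qed
    have "lda_H \<phi> p (\<lambda>k. \<theta>s k + t * e k) \<le> lda_H \<phi> p \<theta>s"
      using unique_max[OF mem] by (cases "(\<lambda>k. \<theta>s k + t * e k) = \<theta>s") auto
    moreover have "(\<lambda>k. \<theta>s k + 0 * e k) = \<theta>s" by simp
    ultimately show "h t \<le> h 0" unfolding hH by simp
  qed
  then have "(\<Sum>v\<in>UNIV. p v * \<phi> i v / s v - p v * \<phi> j v / s v) = 0"
    by (simp add: c diff_divide_distrib right_diff_distrib)
  then show ?thesis unfolding g_def by (simp add: sum_subtractf)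
qed

lemma g_one: "g k = 1"
proof -
  have "(\<Sum>i\<in>UNIV. \<theta>s i * g i) = (\<Sum>i\<in>UNIV. \<Sum>v\<in>UNIV. \<theta>s i * (p v * \<phi> i v / s v))"
    unfolding g_def by (simp add: sum_distrib_left)
  also have "\<dots> = (\<Sum>v\<in>UNIV. \<Sum>i\<in>UNIV. \<theta>s i * (p v * \<phi> i v / s v))"
    by (rule sum.swap)
  also have "\<dots> = (\<Sum>v\<in>UNIV. (p v / s v) * (\<Sum>i\<in>UNIV. \<theta>s i * \<phi> i v))"
    by (intro sum.cong refl) (simp add: sum_distrib_left mult_ac)
  also have "\<dots> = (\<Sum>v\<in>UNIV. p v)" using s_pos by (simp add: s_def[symmetric] less_imp_neq[symmetric])
  also have "\<dots> = 1" by (rule p_sum)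
  finally have "(\<Sum>i\<in>UNIV. \<theta>s i * g i) = 1" .
  moreover have "(\<Sum>i\<in>UNIV. \<theta>s i * g i) = (\<Sum>i\<in>UNIV. \<theta>s i * g k)"
    by (intro sum.cong refl) (metis g_const)
  moreover have "(\<Sum>i\<in>UNIV. \<theta>s i * g k) = (\<Sum>i\<in>UNIV. \<theta>s i) * g k"
    by (simp add: sum_distrib_right)
  ultimately show ?thesis by (simp add: ts_sum)
qed

definition mus where "mus = Min (range s)"
lemma mus_pos: "0 < mus" and mus_le: "mus \<le> s v"
  unfolding mus_def using s_pos by auto

lemma hess: "hessian (lda_H \<phi> p) \<theta>s i j = Qm i j"
proof -
  define G where "G = (\<lambda>t. \<Sum>v\<in>UNIV. p v * (\<phi> i v / (s v + t * \<phi> j v)))"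
  have inner: "deriv (\<lambda>a. lda_H \<phi> p (\<lambda>l. \<theta>s l + a * (if l = i then 1 else 0) + t * (if l = j then 1 else 0))) 0 = G t"
    if t: "\<bar>t\<bar> < mus" for t
  proof -
    have pos: "0 < (s v + t * \<phi> j v) + a * \<phi> i v" if "a = 0" for v a
    proof -
      have "\<bar>t\<bar> * \<phi> j v \<le> \<bar>t\<bar> * 1" by (rule mult_left_mono) (auto simp: phi_le1)
      then have "\<bar>t * \<phi> j v\<bar> \<le> \<bar>t\<bar>" using phi_nn[of j v] by (simp add: abs_mult)
      then have "0 < s v + t * \<phi> j v" using t mus_le[of v] by linarith
      then show ?thesis using that by simp
    qed
    have eq: "lda_H \<phi> p (\<lambda>l. \<theta>s l + a * (if l = i then 1 else 0) + t * (if l = j then 1 else 0))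
        = (\<Sum>v\<in>UNIV. p v * ln ((s v + t * \<phi> j v) + a * \<phi> i v))" for a
    proof -
      have "(\<Sum>k\<in>UNIV. (\<theta>s k + a * (if k = i then 1 else 0) + t * (if k = j then 1 else 0)) * \<phi> k v)
          = (s v + t * \<phi> j v) + a * \<phi> i v" for v
      proof -
        have "(\<Sum>k\<in>UNIV. (\<theta>s k + a * (if k = i then 1 else 0) + t * (if k = j then 1 else 0)) * \<phi> k v)
            = (\<Sum>k\<in>UNIV. \<theta>s k * \<phi> k v + (if k = i then a * \<phi> i v else 0) + (if k = j then t * \<phi> j v else 0))"
          by (intro sum.cong refl) (auto simp: algebra_simps)
        also have "\<dots> = (s v + t * \<phi> j v) + a * \<phi> i v"
          by (simp add: sum.distrib s_def)
        finally show ?thesis .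
      qed
      then show ?thesis unfolding lda_H_def by simp
    qed
    have "((\<lambda>a. \<Sum>v\<in>UNIV. p v * ln ((s v + t * \<phi> j v) + a * \<phi> i v)) has_real_derivative
          (\<Sum>v\<in>UNIV. p v * (\<phi> i v / ((s v + t * \<phi> j v) + 0 * \<phi> i v)))) (at 0)"
      by (rule deriv_dir) (rule pos, simp)
    then show ?thesis unfolding eq G_def by (simp add: DERIV_imp_deriv)
  qed
  have ev: "eventually (\<lambda>t. deriv (\<lambda>a. lda_H \<phi> p (\<lambda>l. \<theta>s l + a * (if l = i then 1 else 0) + t * (if l = j then 1 else 0))) 0 = G t) (nhds 0)"
  proof -
    have "eventually (\<lambda>t. t \<in> ball 0 mus) (nhds (0::real))"
      by (rule eventually_nhds_in_open) (auto simp: mus_pos)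
    then show ?thesis by eventually_elim (auto intro!: inner simp: dist_real_def)
  qed
  have DG: "(G has_real_derivative Qm i j) (at 0)"
  proof -
    have "(G has_real_derivative (\<Sum>v\<in>UNIV. p v * (- (\<phi> i v * \<phi> j v) / (s v + 0 * \<phi> j v)\<^sup>2))) (at 0)"
      unfolding G_def
      by (rule DERIV_sum) (auto intro!: derivative_eq_intros simp: s_pos[THEN less_imp_neq, symmetric] field_simps power2_eq_square)
    moreover have "(\<Sum>v\<in>UNIV. p v * (- (\<phi> i v * \<phi> j v) / (s v + 0 * \<phi> j v)\<^sup>2)) = Qm i j"
      unfolding Qm_def by (simp add: sum_negf[symmetric] mult.assoc)
    ultimately show ?thesis by simp
  qed
  have "((\<lambda>t. deriv (\<lambda>a. lda_H \<phi> p (\<lambda>l. \<theta>s l + a * (if l = i then 1 else 0) + t * (if l = j then 1 else 0))) 0) has_real_derivative Qm i j) (at 0)"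
    using DG by (subst DERIV_cong_ev[OF refl ev refl])
  then show ?thesis unfolding hessian_def by (rule DERIV_imp_deriv)
qed


definition uQ where "uQ d v = (\<Sum>k\<in>UNIV. d k * \<phi> k v) / s v"
definition qQd where "qQd d = (\<Sum>v\<in>UNIV. p v * (uQ d v)\<^sup>2)"

lemma sum_p_uQ: assumes "(\<Sum>k\<in>UNIV. d k) = 0" shows "(\<Sum>v\<in>UNIV. p v * uQ d v) = 0"
proof -
  have "(\<Sum>v\<in>UNIV. p v * uQ d v) = (\<Sum>v\<in>UNIV. \<Sum>k\<in>UNIV. d k * (p v * \<phi> k v / s v))"
    unfolding uQ_def by (intro sum.cong refl) (simp add: sum_distrib_left sum_divide_distrib mult_ac)
  also have "\<dots> = (\<Sum>k\<in>UNIV. \<Sum>v\<in>UNIV. d k * (p v * \<phi> k v / s v))" by (rule sum.swap)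
  also have "\<dots> = (\<Sum>k\<in>UNIV. d k * g k)" unfolding g_def by (simp add: sum_distrib_left)
  also have "\<dots> = 0" using assms by (simp add: g_one)
  finally show ?thesis .
qed

lemma H_decomp:
  assumes d0: "(\<Sum>k\<in>UNIV. d k) = 0" and pos: "\<And>v. 0 < s v + (\<Sum>k\<in>UNIV. d k * \<phi> k v)"
  shows "lda_H \<phi> p (\<lambda>k. \<theta>s k + d k) - lda_H \<phi> p \<theta>s = (\<Sum>v\<in>UNIV. p v * psi (uQ d v))"
proof -
  have one: "0 < 1 + uQ d v" for v
  proof -
    have "0 < (s v + (\<Sum>k\<in>UNIV. d k * \<phi> k v)) / s v" using pos[of v] s_pos[of v] by simp
    also have "(s v + (\<Sum>k\<in>UNIV. d k * \<phi> k v)) / s v = 1 + uQ d v"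
      unfolding uQ_def using s_pos[of v] by (simp add: field_simps)
    finally show ?thesis .
  qed
  have eq: "ln (\<Sum>k\<in>UNIV. (\<theta>s k + d k) * \<phi> k v) = ln (s v) + ln (1 + uQ d v)" for v
  proof -
    have "(\<Sum>k\<in>UNIV. (\<theta>s k + d k) * \<phi> k v) = s v * (1 + uQ d v)"
      unfolding uQ_def s_def using s_pos[of v] by (simp add: distrib_right sum.distrib field_simps s_def[symmetric])
    then show ?thesis using s_pos[of v] one[of v] by (simp add: ln_mult)
  qed
  have "lda_H \<phi> p (\<lambda>k. \<theta>s k + d k) - lda_H \<phi> p \<theta>s = (\<Sum>v\<in>UNIV. p v * ln (1 + uQ d v))"
    unfolding lda_H_def eq s_def[symmetric] by (simp add: distrib_left sum.distrib)
  also have "\<dots> = (\<Sum>v\<in>UNIV. p v * psi (uQ d v)) + (\<Sum>v\<in>UNIV. p v * uQ d v)"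
    unfolding psi_def by (simp add: right_diff_distrib sum_subtractf)
  also have "(\<Sum>v\<in>UNIV. p v * uQ d v) = 0" by (rule sum_p_uQ[OF d0])
  finally show ?thesis by simp
qed

lemma KL_decomp:
  assumes d0: "(\<Sum>k\<in>UNIV. d k) = 0" and pos: "\<And>k. 0 < \<theta>s k + d k"
  shows "- KL \<theta>s (\<lambda>k. \<theta>s k + d k) = (\<Sum>k\<in>UNIV. \<theta>s k * psi (d k / \<theta>s k))"
proof -
  have each: "- (\<theta>s k * ln (\<theta>s k / (\<theta>s k + d k))) = \<theta>s k * psi (d k / \<theta>s k) + d k" for k
  proof -
    have t: "0 < \<theta>s k" by (rule ts_pos)
    have "1 + d k / \<theta>s k = (\<theta>s k + d k) / \<theta>s k" using t by (simp add: field_simps)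
    then have e1: "ln (1 + d k / \<theta>s k) = ln (\<theta>s k + d k) - ln (\<theta>s k)"
      using t pos[of k] by (simp add: ln_div)
    have e2: "ln (\<theta>s k / (\<theta>s k + d k)) = ln (\<theta>s k) - ln (\<theta>s k + d k)"
      using t pos[of k] by (simp add: ln_div)
    have e3: "\<theta>s k * (d k / \<theta>s k) = d k" using t by auto
    show ?thesis unfolding psi_def e1 e2 using t by (simp add: algebra_simps e3)
  qed
  have "- KL \<theta>s (\<lambda>k. \<theta>s k + d k) = (\<Sum>k\<in>UNIV. - (\<theta>s k * ln (\<theta>s k / (\<theta>s k + d k))))"
    unfolding KL_def by (simp add: sum_negf)
  also have "\<dots> = (\<Sum>k\<in>UNIV. \<theta>s k * psi (d k / \<theta>s k)) + (\<Sum>k\<in>UNIV. d k)"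
    unfolding each by (simp add: sum.distrib)
  finally show ?thesis using d0 by simp
qed

lemma qQd_hess: "qQd d = - (\<Sum>i\<in>UNIV. \<Sum>j\<in>UNIV. d i * Qm i j * d j)"
proof -
  have "qQd d = (\<Sum>v\<in>UNIV. \<Sum>i\<in>UNIV. \<Sum>j\<in>UNIV. d i * (p v * \<phi> i v * \<phi> j v / (s v)\<^sup>2) * d j)"
    unfolding qQd_def uQ_def
    by (intro sum.cong refl) (simp add: power2_eq_square sum_product sum_distrib_left sum_divide_distrib mult_ac)
  also have "\<dots> = (\<Sum>i\<in>UNIV. \<Sum>v\<in>UNIV. \<Sum>j\<in>UNIV. d i * (p v * \<phi> i v * \<phi> j v / (s v)\<^sup>2) * d j)"
    by (rule sum.swap)
  also have "\<dots> = (\<Sum>i\<in>UNIV. \<Sum>j\<in>UNIV. \<Sum>v\<in>UNIV. d i * (p v * \<phi> i v * \<phi> j v / (s v)\<^sup>2) * d j)"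
    by (intro sum.cong refl) (rule sum.swap)
  also have "\<dots> = - (\<Sum>i\<in>UNIV. \<Sum>j\<in>UNIV. d i * Qm i j * d j)"
    unfolding Qm_def by (simp add: sum_distrib_left sum_distrib_right sum_negf[symmetric])
  finally show ?thesis .
qed

lemma qQd_nn: "0 \<le> qQd d"
  unfolding qQd_def by (intro sum_nonneg mult_nonneg_nonneg) (auto simp: p_nn)

lemma qQd_pos: "(\<exists>k. d k \<noteq> 0) \<Longrightarrow> (\<Sum>k\<in>UNIV. d k) = 0 \<Longrightarrow> 0 < qQd d"
  using neg_def[of d] unfolding qQd_hess hess by simp

lemma qQd_scale: "qQd (\<lambda>k. c * d k) = c\<^sup>2 * qQd d"
proof -
  have "uQ (\<lambda>k. c * d k) v = c * uQ d v" for v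
    unfolding uQ_def by (simp add: sum_distrib_left mult_ac)
  then show ?thesis unfolding qQd_def by (simp add: power_mult_distrib sum_distrib_left mult_ac)
qed

lemma lam_exists: "\<exists>lam>0. \<forall>d. (\<Sum>k\<in>UNIV. d k) = 0 \<longrightarrow> lam * (\<Sum>k\<in>UNIV. (d k)\<^sup>2) \<le> qQd d"
proof -
  define F where "F = (\<lambda>v::real^'k. qQd (\<lambda>k. v $ k))"
  define S where "S = {v::real^'k. (\<Sum>k\<in>UNIV. v $ k) = 0 \<and> norm v = 1}"
  have contF: "continuous_on A F" for A
    unfolding F_def qQd_def uQ_def by (intro continuous_intros) (auto simp: s_pos less_imp_neq[symmetric])
  have "closed S"
    unfolding S_def by (intro closed_Collect_conj closed_Collect_eq continuous_intros)
  moreover have "bounded S" unfolding S_def by (rule bounded_subset[OF bounded_cball[of 0 1]]) auto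
  ultimately have cS: "compact S" by (simp add: compact_eq_bounded_closed)
  obtain a b :: 'k where ab: "a \<noteq> b"
  proof -
    obtain a :: 'k where True by simp
    have "\<exists>b. b \<noteq> a"
    proof (rule ccontr)
      assume "\<not> (\<exists>b. b \<noteq> a)"
      then have "UNIV = {a}" by auto
      from arg_cong[where f=card, OF this] K2 show False by simp
    qed
    then show ?thesis using that by blast
  qed
  define u :: "real^'k" where "u = (\<chi> k. (if k = a then 1 else 0) - (if k = b then 1 else 0))"
  have u0: "u \<noteq> 0" using ab by (auto simp: u_def vec_eq_iff intro!: exI[of _ a])
  have usum: "(\<Sum>k\<in>UNIV. u $ k) = 0" by (simp add: u_def sum_subtractf)
  have "u /\<^sub>R norm u \<in> S" unfolding S_def using u0 usum by (simp add: sum_distrib_left[symmetric])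
  then have "S \<noteq> {}" by auto
  from continuous_attains_inf[OF cS this contF] obtain v where v: "v \<in> S" "\<And>y. y \<in> S \<Longrightarrow> F v \<le> F y" by blast
  have "v \<noteq> 0" using v(1) by (auto simp: S_def)
  then have "\<exists>k. v $ k \<noteq> 0" by (auto simp: vec_eq_iff)
  then have lam: "0 < F v" unfolding F_def using v(1) by (intro qQd_pos) (auto simp: S_def)
  show ?thesis
  proof (intro exI[of _ "F v"] conjI allI impI lam)
    fix d :: "'k \<Rightarrow> real" assume d0: "(\<Sum>k\<in>UNIV. d k) = 0"
    show "F v * (\<Sum>k\<in>UNIV. (d k)\<^sup>2) \<le> qQd d"
    proof (cases "\<forall>k. d k = 0")
      case True then show ?thesis by (simp add: qQd_nn)
    next
      case False
      define w :: "real^'k" where "w = (\<chi> k. d k)"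
      have w0: "w \<noteq> 0" using False by (auto simp: w_def vec_eq_iff)
      have nw: "(norm w)\<^sup>2 = (\<Sum>k\<in>UNIV. (d k)\<^sup>2)"
        unfolding power2_norm_eq_inner by (simp add: w_def inner_vec_def power2_eq_square)
      have "w /\<^sub>R norm w \<in> S" unfolding S_def using w0 d0 by (simp add: w_def sum_distrib_left[symmetric])
      then have "F v \<le> F (w /\<^sub>R norm w)" by (rule v(2))
      also have "F (w /\<^sub>R norm w) = qQd (\<lambda>k. (1 / norm w) * d k)"
        unfolding F_def by (rule arg_cong[where f=qQd]) (simp add: fun_eq_iff w_def divide_inverse mult.commute)
      also have "\<dots> = (1 / norm w)\<^sup>2 * qQd d" by (rule qQd_scale)
      also have "\<dots> = qQd d / (norm w)\<^sup>2" by (simp add: power_one_over)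
      finally have "F v * (norm w)\<^sup>2 \<le> qQd d" using w0 by (simp add: field_simps)
      then show ?thesis by (simp add: nw)
    qed
  qed
qed


definition l :: 'k where "l = last_coord"
definition J :: "'k set" where "J = UNIV - {l}"
definition hat :: "('k \<Rightarrow> real) \<Rightarrow> 'k \<Rightarrow> real" where
  "hat y = (\<lambda>k. if k = l then - (\<Sum>j\<in>J. y j) else y k)"
definition Hs where "Hs = lda_H \<phi> p \<theta>s"
definition w where "w x = dir_density \<alpha> (lift_simplex x)"
definition Ex1f where "Ex1f x = exp (lda_H \<phi> p (lift_simplex x) - Hs)"
definition Ey1f where "Ey1f x = (if (\<forall>k. 0 < lift_simplex x k) then exp (- KL \<theta>s (lift_simplex x)) else 0)"
definition qR where "qR d = (\<Sum>k\<in>UNIV. \<theta>s k * (d k / \<theta>s k)\<^sup>2)"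
definition qX where "qX y = qQd (hat y)"
definition qY where "qY y = qR (hat y)"

lemma J_fin[simp]: "finite J" by simp
lemma l_notin[simp]: "l \<notin> J" by (simp add: J_def)
lemma UNIV_eq: "UNIV = insert l J" by (auto simp: J_def)
lemma in_J: "k \<in> J \<longleftrightarrow> k \<noteq> l" by (simp add: J_def)

lemma sum_UNIV_split: "(\<Sum>k\<in>UNIV. f k) = f l + (\<Sum>j\<in>J. f j)"
  by (subst UNIV_eq) (simp add: sum.insert)

lemma lift_eq: "lift_simplex x = (\<lambda>k. \<theta>s k + hat (\<lambda>j. x j - \<theta>s j) k)"
proof
  fix k
  show "lift_simplex x k = \<theta>s k + hat (\<lambda>j. x j - \<theta>s j) k"
  proof (cases "k = l")
    case True
    have "(\<Sum>k\<in>UNIV. \<theta>s k) = \<theta>s l + (\<Sum>j\<in>J. \<theta>s j)" by (rule sum_UNIV_split)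
    then have "1 = \<theta>s l + (\<Sum>j\<in>J. \<theta>s j)" by (simp add: ts_sum)
    then show ?thesis using True
      by (simp add: lift_simplex_def hat_def J_def l_def[symmetric] sum_subtractf)
  next
    case False
    then show ?thesis by (simp add: lift_simplex_def hat_def l_def[symmetric])
  qed
qed

lemma hat_sum: "(\<Sum>k\<in>UNIV. hat y k) = 0"
proof -
  have "(\<Sum>j\<in>J. hat y j) = (\<Sum>j\<in>J. y j)" by (intro sum.cong refl) (auto simp: hat_def)
  then show ?thesis by (simp add: sum_UNIV_split hat_def)
qed

lemma hat_sq: "(\<Sum>j\<in>J. (y j)\<^sup>2) \<le> (\<Sum>k\<in>UNIV. (hat y k)\<^sup>2)"
proof -
  have "(\<Sum>j\<in>J. (hat y j)\<^sup>2) = (\<Sum>j\<in>J. (y j)\<^sup>2)" by (intro sum.cong refl) (auto simp: hat_def)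
  then show ?thesis by (simp add: sum_UNIV_split)
qed

lemma hat_scale: "hat (\<lambda>j. c * y j) = (\<lambda>k. c * hat y k)"
  by (auto simp: hat_def sum_distrib_left fun_eq_iff)

lemma hat_cong: "(\<And>j. j \<in> J \<Longrightarrow> y j = y' j) \<Longrightarrow> hat y = hat y'"
  by (auto simp: hat_def fun_eq_iff in_J)

lemma lift_shift: "lift_simplex (\<lambda>j\<in>J. \<theta>s j + y j / sqrt n) = (\<lambda>k. \<theta>s k + hat y k / sqrt n)"
proof -
  have "hat (\<lambda>j. (\<lambda>j\<in>J. \<theta>s j + y j / sqrt n) j - \<theta>s j) = hat (\<lambda>j. (1 / sqrt n) * y j)"
    by (rule hat_cong) simp
  then show ?thesis unfolding lift_eq hat_scale by simp
qed

lemma simplex_nn: "\<theta> \<in> prob_simplex \<Longrightarrow> 0 \<le> \<theta> k" by (simp add: prob_simplex_def)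
lemma simplex_sum: "\<theta> \<in> prob_simplex \<Longrightarrow> (\<Sum>k\<in>UNIV. \<theta> k) = 1" by (simp add: prob_simplex_def)
lemma simplex_le1: assumes "\<theta> \<in> prob_simplex" shows "\<theta> k \<le> 1"
proof -
  have "\<theta> k \<le> (\<Sum>k\<in>UNIV. \<theta> k)" by (rule member_le_sum) (auto simp: simplex_nn[OF assms])
  then show ?thesis by (simp add: simplex_sum[OF assms])
qed

lemma mix_pos: assumes "\<theta> \<in> prob_simplex" shows "0 < (\<Sum>k\<in>UNIV. \<theta> k * \<phi> k v)"
proof -
  obtain k where k: "\<theta> k \<noteq> 0"
  proof (rule ccontr)
    assume "\<not> thesis"
    with that have "\<forall>k. \<theta> k = 0" by blast
    then show False using simplex_sum[OF assms] by simp
  qed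
  then have "0 < \<theta> k" using simplex_nn[OF assms, of k] by simp
  then show ?thesis
    by (intro sum_pos2[of UNIV k]) (auto intro!: mult_nonneg_nonneg simplex_nn[OF assms] phi_nn simp: phi_pos)
qed

lemma mix_le: assumes "\<theta> \<in> prob_simplex" shows "(\<Sum>k\<in>UNIV. \<theta> k * \<phi> k v) \<le> 1"
proof -
  have "(\<Sum>k\<in>UNIV. \<theta> k * \<phi> k v) \<le> (\<Sum>k\<in>UNIV. \<theta> k * 1)"
    by (intro sum_mono mult_left_mono) (auto simp: phi_le1 simplex_nn[OF assms])
  then show ?thesis by (simp add: simplex_sum[OF assms])
qed

definition lam0 where "lam0 = (SOME lam. lam > 0 \<and> (\<forall>d. (\<Sum>k\<in>UNIV. d k) = 0 \<longrightarrow> lam * (\<Sum>k\<in>UNIV. (d k)\<^sup>2) \<le> qQd d))"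

lemma lam0: "lam0 > 0" "\<And>d. (\<Sum>k\<in>UNIV. d k) = 0 \<Longrightarrow> lam0 * (\<Sum>k\<in>UNIV. (d k)\<^sup>2) \<le> qQd d"
  using someI_ex[OF lam_exists] unfolding lam0_def by auto

definition cQ where "cQ = lam0 / (2 * (1 + 1 / mus))"
definition cR where "cR = 1 / (2 * (1 + 1 / mu))"

lemma cQ_pos: "cQ > 0" unfolding cQ_def by (intro divide_pos_pos mult_pos_pos add_pos_pos lam0(1) mus_pos) auto
lemma cR_pos: "cR > 0" unfolding cR_def by (intro divide_pos_pos mult_pos_pos add_pos_pos mu_pos) auto

lemma EX_bound:
  assumes sx: "lift_simplex x \<in> prob_simplex"
  shows "Ex1f x \<le> exp (- cQ * (\<Sum>j\<in>J. (x j - \<theta>s j)\<^sup>2))"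
proof -
  define d where "d = hat (\<lambda>j. x j - \<theta>s j)"
  define U where "U = 1 / mus"
  have U: "0 \<le> U" unfolding U_def using mus_pos by simp
  have th: "lift_simplex x = (\<lambda>k. \<theta>s k + d k)" unfolding d_def by (rule lift_eq)
  have d0: "(\<Sum>k\<in>UNIV. d k) = 0" unfolding d_def by (rule hat_sum)
  have mixeq: "s v + (\<Sum>k\<in>UNIV. d k * \<phi> k v) = (\<Sum>k\<in>UNIV. lift_simplex x k * \<phi> k v)" for v
    unfolding th s_def by (simp add: distrib_right sum.distrib)
  have pos: "0 < s v + (\<Sum>k\<in>UNIV. d k * \<phi> k v)" for v
    unfolding mixeq by (rule mix_pos[OF sx])
  have onep: "1 + uQ d v = (s v + (\<Sum>k\<in>UNIV. d k * \<phi> k v)) / s v" for v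
    unfolding uQ_def using s_pos[of v] by (simp add: field_simps)
  have u_gt: "-1 < uQ d v" for v
  proof -
    have "0 < 1 + uQ d v" unfolding onep using pos[of v] s_pos[of v] by simp
    then show ?thesis by simp
  qed
  have u_le: "uQ d v \<le> U" for v
  proof -
    have "1 + uQ d v \<le> 1 / s v" unfolding onep mixeq using mix_le[OF sx, of v] s_pos[of v]
      by (simp add: divide_right_mono)
    also have "\<dots> \<le> 1 / mus" using mus_le[of v] mus_pos by (simp add: frac_le)
    finally show ?thesis unfolding U_def using mus_pos by simp
  qed
  have "lda_H \<phi> p (lift_simplex x) - Hs = (\<Sum>v\<in>UNIV. p v * psi (uQ d v))"
    unfolding th Hs_def by (rule H_decomp[OF d0 pos])
  also have "\<dots> \<le> (\<Sum>v\<in>UNIV. p v * (- (uQ d v)\<^sup>2 / (2 * (1 + U))))"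
    by (intro sum_mono mult_left_mono psi_le[OF U u_gt u_le]) (simp add: p_nn)
  also have "\<dots> = - qQd d / (2 * (1 + U))"
    unfolding qQd_def by (simp add: sum_divide_distrib sum_negf)
  also have "\<dots> \<le> - (lam0 * (\<Sum>k\<in>UNIV. (d k)\<^sup>2)) / (2 * (1 + U))"
    using lam0(2)[OF d0] U by (intro divide_right_mono) auto
  also have "\<dots> \<le> - (lam0 * (\<Sum>j\<in>J. (x j - \<theta>s j)\<^sup>2)) / (2 * (1 + U))"
    using hat_sq[of "\<lambda>j. x j - \<theta>s j"] lam0(1) U unfolding d_def
    by (intro divide_right_mono) auto
  also have "\<dots> = - cQ * (\<Sum>j\<in>J. (x j - \<theta>s j)\<^sup>2)" unfolding cQ_def U_def by simp
  finally show ?thesis unfolding Ex1f_def by simp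
qed

lemma EY_bound:
  assumes sx: "lift_simplex x \<in> prob_simplex"
  shows "Ey1f x \<le> exp (- cR * (\<Sum>j\<in>J. (x j - \<theta>s j)\<^sup>2))"
proof (cases "\<forall>k. 0 < lift_simplex x k")
  case False then show ?thesis unfolding Ey1f_def by auto
next
  case True
  define d where "d = hat (\<lambda>j. x j - \<theta>s j)"
  define U where "U = 1 / mu"
  have U: "0 \<le> U" unfolding U_def using mu_pos by simp
  have th: "lift_simplex x = (\<lambda>k. \<theta>s k + d k)" unfolding d_def by (rule lift_eq)
  have d0: "(\<Sum>k\<in>UNIV. d k) = 0" unfolding d_def by (rule hat_sum)
  have pos: "0 < \<theta>s k + d k" for k using True th by metis
  have le1: "\<theta>s k + d k \<le> 1" for k using simplex_le1[OF sx, of k] th by metis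
  have u_gt: "-1 < d k / \<theta>s k" for k
  proof -
    have "0 < (\<theta>s k + d k) / \<theta>s k" using pos[of k] ts_pos[of k] by simp
    also have "(\<theta>s k + d k) / \<theta>s k = 1 + d k / \<theta>s k" using ts_pos[of k] by (simp add: field_simps)
    finally show ?thesis by simp
  qed
  have u_le: "d k / \<theta>s k \<le> U" for k
  proof -
    have "1 + d k / \<theta>s k = (\<theta>s k + d k) / \<theta>s k" using ts_pos[of k] by (simp add: field_simps)
    also have "\<dots> \<le> 1 / \<theta>s k" using le1[of k] ts_pos[of k] by (simp add: divide_right_mono)
    also have "\<dots> \<le> 1 / mu" using mu_le[of k] mu_pos by (simp add: frac_le)
    finally show ?thesis unfolding U_def using mu_pos by simp
  qed
  have dd: "(d k)\<^sup>2 \<le> \<theta>s k * (d k / \<theta>s k)\<^sup>2" for k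
  proof -
    have t: "0 < \<theta>s k" "\<theta>s k \<le> 1" using ts_pos[of k] simplex_le1[OF ts_simplex, of k] by auto
    have "\<theta>s k * (d k / \<theta>s k)\<^sup>2 = (d k)\<^sup>2 / \<theta>s k" using t by (simp add: power2_eq_square)
    moreover have "(d k)\<^sup>2 * \<theta>s k \<le> (d k)\<^sup>2 * 1" using t by (intro mult_left_mono) auto
    then have "(d k)\<^sup>2 \<le> (d k)\<^sup>2 / \<theta>s k" using t by (simp add: le_divide_eq)
    ultimately show ?thesis by simp
  qed
  have "- KL \<theta>s (lift_simplex x) = (\<Sum>k\<in>UNIV. \<theta>s k * psi (d k / \<theta>s k))"
    unfolding th by (rule KL_decomp[OF d0 pos])
  also have "\<dots> \<le> (\<Sum>k\<in>UNIV. \<theta>s k * (- (d k / \<theta>s k)\<^sup>2 / (2 * (1 + U))))"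
    by (intro sum_mono mult_left_mono psi_le[OF U u_gt u_le]) (simp add: less_imp_le[OF ts_pos])
  also have "\<dots> = - (\<Sum>k\<in>UNIV. \<theta>s k * (d k / \<theta>s k)\<^sup>2) / (2 * (1 + U))"
    by (simp add: sum_divide_distrib sum_negf)
  also have "\<dots> \<le> - (\<Sum>k\<in>UNIV. (d k)\<^sup>2) / (2 * (1 + U))"
    using U by (intro divide_right_mono) (auto intro!: sum_mono dd)
  also have "\<dots> \<le> - (\<Sum>j\<in>J. (x j - \<theta>s j)\<^sup>2) / (2 * (1 + U))"
    using hat_sq[of "\<lambda>j. x j - \<theta>s j"] U unfolding d_def by (intro divide_right_mono) auto
  also have "\<dots> = - cR * (\<Sum>j\<in>J. (x j - \<theta>s j)\<^sup>2)" unfolding cR_def U_def by simp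
  finally show ?thesis unfolding Ey1f_def using True by simp
qed


lemma c_over_sqrt: "(\<lambda>n. c / sqrt (real n)) \<longlonglongrightarrow> 0"
  by real_asymp

lemma hat_div_sum: "(\<Sum>k\<in>UNIV. hat y k / c) = 0"
  by (simp add: sum_divide_distrib[symmetric] hat_sum)

lemma Ex1f_lim: "(\<lambda>n. Ex1f (\<lambda>j\<in>J. \<theta>s j + y j / sqrt n) ^ n) \<longlonglongrightarrow> exp (- qX y / 2)"
proof -
  define a where "a = (\<lambda>v. uQ (hat y) v)"
  have ev: "eventually (\<lambda>n. \<forall>v. 0 < s v + (\<Sum>k\<in>UNIV. (hat y k / sqrt n) * \<phi> k v)) sequentially"
  proof (rule eventually_all_finite)
    fix v
    have "(\<lambda>n. (\<Sum>k\<in>UNIV. hat y k * \<phi> k v) / sqrt (real n)) \<longlonglongrightarrow> 0" by (rule c_over_sqrt)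
    then have "eventually (\<lambda>n. - s v < (\<Sum>k\<in>UNIV. hat y k * \<phi> k v) / sqrt (real n)) sequentially"
      using s_pos[of v] by (intro order_tendstoD(1)) auto
    then show "eventually (\<lambda>n. 0 < s v + (\<Sum>k\<in>UNIV. (hat y k / sqrt n) * \<phi> k v)) sequentially"
      by eventually_elim (simp add: sum_divide_distrib[symmetric])
  qed
  have eq: "Ex1f (\<lambda>j\<in>J. \<theta>s j + y j / sqrt n) ^ n = exp (\<Sum>v\<in>UNIV. p v * (real n * psi (a v / sqrt n)))"
    if "\<forall>v. 0 < s v + (\<Sum>k\<in>UNIV. (hat y k / sqrt n) * \<phi> k v)" for n
  proof -
    have "lda_H \<phi> p (\<lambda>k. \<theta>s k + hat y k / sqrt n) - Hs = (\<Sum>v\<in>UNIV. p v * psi (uQ (\<lambda>k. hat y k / sqrt n) v))"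
      unfolding Hs_def by (rule H_decomp) (use that hat_div_sum in auto)
    moreover have uq: "uQ (\<lambda>k. hat y k / sqrt n) v = a v / sqrt n" for v
      unfolding a_def uQ_def by (simp add: sum_divide_distrib[symmetric])
    ultimately have "lda_H \<phi> p (\<lambda>k. \<theta>s k + hat y k / sqrt n) - Hs = (\<Sum>v\<in>UNIV. p v * psi (a v / sqrt n))"
      by (simp only: uq)
    then have "Ex1f (\<lambda>j\<in>J. \<theta>s j + y j / sqrt n) = exp (\<Sum>v\<in>UNIV. p v * psi (a v / sqrt n))"
      unfolding Ex1f_def lift_shift by simp
    then have "Ex1f (\<lambda>j\<in>J. \<theta>s j + y j / sqrt n) ^ n = exp (real n * (\<Sum>v\<in>UNIV. p v * psi (a v / sqrt n)))"
      by (simp add: exp_of_nat_mult)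
    then show ?thesis by (simp add: sum_distrib_left mult_ac)
  qed
  have lim: "(\<lambda>n. exp (\<Sum>v\<in>UNIV. p v * (real n * psi (a v / sqrt n)))) \<longlonglongrightarrow> exp (\<Sum>v\<in>UNIV. p v * (- (a v * a v / 2)))"
    by (intro tendsto_exp tendsto_sum tendsto_mult_left psi_lim)
  have "(\<Sum>v\<in>UNIV. p v * (- (a v * a v / 2))) = - qX y / 2"
    unfolding qX_def qQd_def a_def by (simp add: sum_divide_distrib sum_negf power2_eq_square)
  with lim have "(\<lambda>n. exp (\<Sum>v\<in>UNIV. p v * (real n * psi (a v / sqrt n)))) \<longlonglongrightarrow> exp (- qX y / 2)" by simp
  moreover have "eventually (\<lambda>n. exp (\<Sum>v\<in>UNIV. p v * (real n * psi (a v / sqrt n))) = Ex1f (\<lambda>j\<in>J. \<theta>s j + y j / sqrt n) ^ n) sequentially"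
    using ev by eventually_elim (simp add: eq)
  ultimately show ?thesis by (rule Lim_transform_eventually)
qed

lemma Ey1f_lim: "(\<lambda>n. Ey1f (\<lambda>j\<in>J. \<theta>s j + y j / sqrt n) ^ n) \<longlonglongrightarrow> exp (- qY y / 2)"
proof -
  define b where "b = (\<lambda>k. hat y k / \<theta>s k)"
  have ev: "eventually (\<lambda>n. \<forall>k. 0 < \<theta>s k + hat y k / sqrt n) sequentially"
  proof (rule eventually_all_finite)
    fix k
    have "(\<lambda>n. hat y k / sqrt (real n)) \<longlonglongrightarrow> 0" by (rule c_over_sqrt)
    then have "eventually (\<lambda>n. - \<theta>s k < hat y k / sqrt (real n)) sequentially"
      using ts_pos[of k] by (intro order_tendstoD(1)) auto
    then show "eventually (\<lambda>n. 0 < \<theta>s k + hat y k / sqrt n) sequentially"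
      by eventually_elim simp
  qed
  have eq: "Ey1f (\<lambda>j\<in>J. \<theta>s j + y j / sqrt n) ^ n = exp (\<Sum>k\<in>UNIV. \<theta>s k * (real n * psi (b k / sqrt n)))"
    if pos: "\<forall>k. 0 < \<theta>s k + hat y k / sqrt n" for n
  proof -
    have "- KL \<theta>s (\<lambda>k. \<theta>s k + hat y k / sqrt n) = (\<Sum>k\<in>UNIV. \<theta>s k * psi ((hat y k / sqrt n) / \<theta>s k))"
      by (rule KL_decomp) (use pos hat_div_sum in auto)
    moreover have bb: "(hat y k / sqrt n) / \<theta>s k = b k / sqrt n" for k unfolding b_def by simp
    ultimately have kl: "- KL \<theta>s (\<lambda>k. \<theta>s k + hat y k / sqrt n) = (\<Sum>k\<in>UNIV. \<theta>s k * psi (b k / sqrt n))"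
      by (simp only: bb)
    have "Ey1f (\<lambda>j\<in>J. \<theta>s j + y j / sqrt n) = exp (\<Sum>k\<in>UNIV. \<theta>s k * psi (b k / sqrt n))"
      unfolding Ey1f_def lift_shift using pos kl by simp
    then have "Ey1f (\<lambda>j\<in>J. \<theta>s j + y j / sqrt n) ^ n = exp (real n * (\<Sum>k\<in>UNIV. \<theta>s k * psi (b k / sqrt n)))"
      by (simp add: exp_of_nat_mult)
    then show ?thesis by (simp add: sum_distrib_left mult_ac)
  qed
  have lim: "(\<lambda>n. exp (\<Sum>k\<in>UNIV. \<theta>s k * (real n * psi (b k / sqrt n)))) \<longlonglongrightarrow> exp (\<Sum>k\<in>UNIV. \<theta>s k * (- (b k * b k / 2)))"
    by (intro tendsto_exp tendsto_sum tendsto_mult_left psi_lim)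
  have "(\<Sum>k\<in>UNIV. \<theta>s k * (- (b k * b k / 2))) = (\<Sum>k\<in>UNIV. - (\<theta>s k * (b k)\<^sup>2 / 2))"
    by (intro sum.cong refl) (simp add: power2_eq_square)
  also have "\<dots> = - (\<Sum>k\<in>UNIV. \<theta>s k * (b k)\<^sup>2) / 2" by (simp add: sum_negf sum_divide_distrib)
  also have "\<dots> = - qY y / 2" unfolding qY_def qR_def b_def by simp
  finally have "(\<Sum>k\<in>UNIV. \<theta>s k * (- (b k * b k / 2))) = - qY y / 2" .
  with lim have "(\<lambda>n. exp (\<Sum>k\<in>UNIV. \<theta>s k * (real n * psi (b k / sqrt n)))) \<longlonglongrightarrow> exp (- qY y / 2)" by simp
  moreover have "eventually (\<lambda>n. exp (\<Sum>k\<in>UNIV. \<theta>s k * (real n * psi (b k / sqrt n))) = Ey1f (\<lambda>j\<in>J. \<theta>s j + y j / sqrt n) ^ n) sequentially"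
    using ev by eventually_elim (simp add: eq)
  ultimately show ?thesis by (rule Lim_transform_eventually)
qed

lemma mbeta_pos: "0 < mbeta \<alpha>"
  unfolding mbeta_def using alpha_pos
  by (intro divide_pos_pos prod_pos Gamma_real_pos sum_pos) auto

lemma dens_simplex: "\<theta> \<in> prob_simplex \<Longrightarrow> dir_density \<alpha> \<theta> = (\<Prod>i\<in>UNIV. \<theta> i powr (\<alpha> i - 1)) / mbeta \<alpha>"
  by (simp add: dir_density_def)

lemma pos_simplex:
  assumes "\<forall>k. 0 < \<theta>s k + d k" "(\<Sum>k\<in>UNIV. d k) = 0"
  shows "(\<lambda>k. \<theta>s k + d k) \<in> prob_simplex"
  using assms by (auto simp: prob_simplex_def sum.distrib ts_sum less_imp_le)

lemma w_lim: "(\<lambda>n. w (\<lambda>j\<in>J. \<theta>s j + y j / sqrt n)) \<longlonglongrightarrow> dir_density \<alpha> \<theta>s"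
proof -
  have ev: "eventually (\<lambda>n. \<forall>k. 0 < \<theta>s k + hat y k / sqrt n) sequentially"
  proof (rule eventually_all_finite)
    fix k
    have "(\<lambda>n. hat y k / sqrt (real n)) \<longlonglongrightarrow> 0" by (rule c_over_sqrt)
    then have "eventually (\<lambda>n. - \<theta>s k < hat y k / sqrt (real n)) sequentially"
      using ts_pos[of k] by (intro order_tendstoD(1)) auto
    then show "eventually (\<lambda>n. 0 < \<theta>s k + hat y k / sqrt n) sequentially"
      by eventually_elim simp
  qed
  have lim: "(\<lambda>n. (\<Prod>i\<in>UNIV. (\<theta>s i + hat y i / sqrt n) powr (\<alpha> i - 1)) / mbeta \<alpha>)
      \<longlonglongrightarrow> (\<Prod>i\<in>UNIV. (\<theta>s i + 0) powr (\<alpha> i - 1)) / mbeta \<alpha>"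
    by (intro tendsto_divide tendsto_const tendsto_prod tendsto_powr tendsto_add c_over_sqrt)
       (auto simp: ts_pos[THEN less_imp_neq, symmetric] mbeta_pos[THEN less_imp_neq, symmetric])
  have "eventually (\<lambda>n. (\<Prod>i\<in>UNIV. (\<theta>s i + hat y i / sqrt n) powr (\<alpha> i - 1)) / mbeta \<alpha> = w (\<lambda>j\<in>J. \<theta>s j + y j / sqrt n)) sequentially"
    using ev
  proof eventually_elim
    case (elim n)
    have "(\<lambda>k. \<theta>s k + hat y k / sqrt n) \<in> prob_simplex" by (rule pos_simplex) (use elim hat_div_sum in auto)
    then show ?case unfolding w_def lift_shift by (simp add: dens_simplex)
  qed
  moreover have "dir_density \<alpha> \<theta>s = (\<Prod>i\<in>UNIV. (\<theta>s i + 0) powr (\<alpha> i - 1)) / mbeta \<alpha>"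
    using ts_simplex by (simp add: dens_simplex)
  ultimately show ?thesis using lim by (simp add: Lim_transform_eventually)
qed


lemma powr_bound2:
  fixes t a lo hi :: real
  assumes "0 < lo" "lo \<le> t" "t \<le> hi"
  shows "t powr a \<le> lo powr a + hi powr a"
proof (cases "a \<ge> 0")
  case True
  then have "t powr a \<le> hi powr a" using assms by (intro powr_mono2) auto
  then show ?thesis by (simp add: add_increasing)
next
  case False
  then have "t powr a \<le> lo powr a" using assms by (intro powr_mono2') auto
  then show ?thesis by (simp add: add_increasing2)
qed

lemma w_loc: "\<exists>\<delta>>0. \<exists>W. \<forall>x. (\<Sum>j\<in>J. (x j - \<theta>s j)\<^sup>2) < \<delta> \<longrightarrow> w x \<le> W"
proof -
  define K where "K = real CARD('k)"
  have K: "K \<ge> 2" unfolding K_def using K2 by simp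
  define \<eta> where "\<eta> = mu / (2 * K)"
  have \<eta>: "\<eta> > 0" unfolding \<eta>_def using mu_pos K by simp
  define W where "W = (\<Prod>i\<in>UNIV. (mu/2) powr (\<alpha> i - 1) + 2 powr (\<alpha> i - 1)) / mbeta \<alpha>"
  have "\<forall>x. (\<Sum>j\<in>J. (x j - \<theta>s j)\<^sup>2) < \<eta>\<^sup>2 \<longrightarrow> w x \<le> W"
  proof (intro allI impI)
    fix x :: "'k \<Rightarrow> real" assume x: "(\<Sum>j\<in>J. (x j - \<theta>s j)\<^sup>2) < \<eta>\<^sup>2"
    define d where "d = hat (\<lambda>j. x j - \<theta>s j)"
    have th: "lift_simplex x = (\<lambda>k. \<theta>s k + d k)" unfolding d_def by (rule lift_eq)
    have each: "\<bar>x j - \<theta>s j\<bar> \<le> \<eta>" if "j \<in> J" for j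
    proof -
      have "(x j - \<theta>s j)\<^sup>2 \<le> (\<Sum>j\<in>J. (x j - \<theta>s j)\<^sup>2)"
        by (rule member_le_sum) (use that in auto)
      then have "(x j - \<theta>s j)\<^sup>2 \<le> \<eta>\<^sup>2" using x by simp
      then show ?thesis using \<eta> power2_le_iff_abs_le[of \<eta> "x j - \<theta>s j"] by simp
    qed
    have cardJ: "real (card J) \<le> K" unfolding K_def by (simp add: card_mono)
    have dk: "\<bar>d k\<bar> \<le> mu / 2" for k
    proof (cases "k = l")
      case True
      have "\<bar>d k\<bar> = \<bar>\<Sum>j\<in>J. x j - \<theta>s j\<bar>" using True by (simp add: d_def hat_def)
      also have "\<dots> \<le> (\<Sum>j\<in>J. \<bar>x j - \<theta>s j\<bar>)" by (rule sum_abs)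
      also have "\<dots> \<le> real (card J) * \<eta>" by (rule sum_bounded_above) (rule each)
      also have "\<dots> \<le> K * \<eta>" using cardJ \<eta> by (simp add: mult_right_mono)
      also have "K * \<eta> = mu / 2" unfolding \<eta>_def using K by simp
      finally show ?thesis .
    next
      case False
      then have "k \<in> J" by (simp add: in_J)
      then have "\<bar>d k\<bar> \<le> \<eta>" using each False by (simp add: d_def hat_def)
      also have "\<eta> \<le> mu / 2" unfolding \<eta>_def using mu_pos K by (simp add: field_simps)
      finally show ?thesis .
    qed
    have lo: "mu / 2 \<le> \<theta>s k + d k" for k using dk[of k] mu_le[of k] by (simp add: abs_le_iff)
    have hi: "\<theta>s k + d k \<le> 2" for k
      using dk[of k] simplex_le1[OF ts_simplex, of k] mu_le[of k] by (simp add: abs_le_iff)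
    have d0: "(\<Sum>k\<in>UNIV. d k) = 0" unfolding d_def by (rule hat_sum)
    have sx: "lift_simplex x \<in> prob_simplex" unfolding th
      by (rule pos_simplex) (use lo mu_pos d0 in \<open>auto intro: less_le_trans[of 0 "mu/2"]\<close>)
    have "w x = (\<Prod>i\<in>UNIV. (\<theta>s i + d i) powr (\<alpha> i - 1)) / mbeta \<alpha>"
      unfolding w_def using sx by (simp add: dens_simplex th)
    also have "\<dots> \<le> W" unfolding W_def using mbeta_pos
      by (intro divide_right_mono prod_mono conjI powr_bound2[OF _ lo hi]) (auto simp: mu_pos)
    finally show "w x \<le> W" .
  qed
  moreover have "0 < \<eta>\<^sup>2" using \<eta> by simp
  ultimately show ?thesis by blast
qed


lemma simplex_pred: "(\<theta> \<in> prob_simplex) = ((\<forall>i. 0 \<le> \<theta> i) \<and> (\<Sum>i\<in>UNIV. \<theta> i) = 1)"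
  by (simp add: prob_simplex_def)

lemma lift_comp: "lift_simplex x k = (if k = l then 1 - (\<Sum>j\<in>J. x j) else x k)"
  by (simp add: lift_simplex_def J_def l_def)

lemma lift_comp_meas: "(\<lambda>x. lift_simplex x k) \<in> borel_measurable (PiM J (\<lambda>_. lborel))"
proof (cases "k = l")
  case True
  then show ?thesis unfolding lift_comp by simp
next
  case False
  then have "k \<in> J" by (simp add: in_J)
  then show ?thesis unfolding lift_comp using False by simp
qed

lemma lift_meas[measurable]: "lift_simplex \<in> measurable (PiM J (\<lambda>_. lborel)) (PiM UNIV (\<lambda>_. lborel :: real measure))"
proof -
  have "(\<lambda>x k. lift_simplex x k) \<in> measurable (PiM J (\<lambda>_. lborel)) (PiM UNIV (\<lambda>_. lborel :: real measure))"
    by (rule measurable_PiM_single') (auto simp: lift_comp_meas space_PiM)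
  then show ?thesis by simp
qed

lemma dd_meas[measurable]: "dir_density \<alpha> \<in> borel_measurable (PiM UNIV (\<lambda>_. lborel))"
  unfolding dir_density_def[abs_def] simplex_pred by measurable

lemma H_meas[measurable]: "lda_H \<phi> p \<in> borel_measurable (PiM UNIV (\<lambda>_. lborel))"
  unfolding lda_H_def[abs_def] by measurable

lemma KLf_meas[measurable]: "(\<lambda>\<theta>. if (\<forall>k. 0 < \<theta> k) then exp (- KL \<theta>s \<theta>) else 0) \<in> borel_measurable (PiM UNIV (\<lambda>_. lborel))"
  unfolding KL_def by measurable

lemma w_meas[measurable]: "w \<in> borel_measurable (PiM J (\<lambda>_. lborel))"
  unfolding w_def[abs_def] by (rule measurable_compose[OF lift_meas dd_meas])

lemma Ex1f_meas[measurable]: "Ex1f \<in> borel_measurable (PiM J (\<lambda>_. lborel))"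
proof -
  have "(\<lambda>x. lda_H \<phi> p (lift_simplex x)) \<in> borel_measurable (PiM J (\<lambda>_. lborel))"
    by (rule measurable_compose[OF lift_meas H_meas])
  then show ?thesis unfolding Ex1f_def[abs_def] by measurable
qed

lemma Ey1f_meas[measurable]: "Ey1f \<in> borel_measurable (PiM J (\<lambda>_. lborel))"
  unfolding Ey1f_def[abs_def] by (rule measurable_compose[OF lift_meas KLf_meas])

lemma w_nn: "0 \<le> w x"
  unfolding w_def dir_density_def using mbeta_pos by (auto intro!: prod_nonneg divide_nonneg_pos)

definition Ck where "Ck k = 1 + (1 / real CARD('k)) powr (\<alpha> k - 1)"
definition G where "G k x = (\<Prod>i\<in>UNIV - {k}. fb (\<alpha> i) (lift_simplex x i))"

lemma G_nn: "0 \<le> G k x" unfolding G_def by (intro prod_nonneg) (simp add: fb_nn)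
lemma Ck_nn: "0 \<le> Ck k" unfolding Ck_def by (simp add: add_nonneg_nonneg)

lemma dens_bound:
  assumes sx: "\<theta> \<in> prob_simplex"
  shows "(\<Prod>i\<in>UNIV. \<theta> i powr (\<alpha> i - 1)) \<le> (\<Sum>k\<in>UNIV. Ck k * (\<Prod>i\<in>UNIV - {k}. fb (\<alpha> i) (\<theta> i)))"
proof -
  define K where "K = real CARD('k)"
  have K: "K > 0" unfolding K_def by simp
  obtain k where k: "1 / K \<le> \<theta> k"
  proof (rule ccontr)
    assume "\<not> thesis"
    then have lt: "\<theta> i < 1 / K" for i using that not_le by blast
    have "(\<Sum>i\<in>UNIV. \<theta> i) < (\<Sum>i\<in>(UNIV::'k set). 1 / K)"
      by (rule sum_strict_mono) (auto simp: lt)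
    also have "\<dots> = 1" unfolding K_def by simp
    finally show False using simplex_sum[OF sx] by simp
  qed
  have fbeq: "\<theta> i powr (\<alpha> i - 1) = fb (\<alpha> i) (\<theta> i)" for i
    using simplex_nn[OF sx, of i] simplex_le1[OF sx, of i] by (simp add: fb_def)
  have "(\<Prod>i\<in>UNIV. \<theta> i powr (\<alpha> i - 1)) = \<theta> k powr (\<alpha> k - 1) * (\<Prod>i\<in>UNIV - {k}. \<theta> i powr (\<alpha> i - 1))"
    by (simp add: prod.remove[of UNIV k])
  also have "\<dots> \<le> Ck k * (\<Prod>i\<in>UNIV - {k}. fb (\<alpha> i) (\<theta> i))"
  proof (rule mult_mono)
    have "\<theta> k powr (\<alpha> k - 1) \<le> (1/K) powr (\<alpha> k - 1) + 1 powr (\<alpha> k - 1)"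
      by (rule powr_bound2) (use K k simplex_le1[OF sx, of k] in auto)
    then show "\<theta> k powr (\<alpha> k - 1) \<le> Ck k" unfolding Ck_def K_def by simp
    show "(\<Prod>i\<in>UNIV - {k}. \<theta> i powr (\<alpha> i - 1)) \<le> (\<Prod>i\<in>UNIV - {k}. fb (\<alpha> i) (\<theta> i))"
      by (simp add: fbeq)
  qed (auto simp: Ck_nn intro!: prod_nonneg)
  also have "\<dots> \<le> (\<Sum>k\<in>UNIV. Ck k * (\<Prod>i\<in>UNIV - {k}. fb (\<alpha> i) (\<theta> i)))"
    by (rule member_le_sum) (auto intro!: mult_nonneg_nonneg prod_nonneg simp: Ck_nn fb_nn)
  finally show ?thesis .
qed

lemma w_bound: "w x \<le> (\<Sum>k\<in>UNIV. (Ck k / mbeta \<alpha>) * G k x)"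
proof (cases "lift_simplex x \<in> prob_simplex")
  case True
  have "w x = (\<Prod>i\<in>UNIV. lift_simplex x i powr (\<alpha> i - 1)) / mbeta \<alpha>"
    unfolding w_def using True by (simp add: dens_simplex)
  also have "\<dots> \<le> (\<Sum>k\<in>UNIV. Ck k * G k x) / mbeta \<alpha>"
    unfolding G_def using mbeta_pos by (intro divide_right_mono dens_bound[OF True]) auto
  also have "\<dots> = (\<Sum>k\<in>UNIV. (Ck k / mbeta \<alpha>) * G k x)" by (simp add: sum_divide_distrib)
  finally show ?thesis .
next
  case False
  then have "w x = 0" by (simp add: w_def dir_density_def)
  then show ?thesis using mbeta_pos by (auto intro!: sum_nonneg mult_nonneg_nonneg simp: Ck_nn G_nn)
qed

lemma G_meas[measurable]: "G k \<in> borel_measurable (PiM J (\<lambda>_. lborel))"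
  unfolding G_def[abs_def] by (intro borel_measurable_prod measurable_compose[OF lift_comp_meas fb_meas])

lemma G_int: "integrable (PiM J (\<lambda>_. lborel)) (G k)"
proof (cases "k = l")
  case True
  interpret product_sigma_finite "\<lambda>_. lborel :: real measure" by standard
  have "G k = (\<lambda>x. \<Prod>i\<in>J. fb (\<alpha> i) (x i))"
  proof
    fix x
    have "UNIV - {k} = J" using True by (auto simp: J_def)
    then show "G k x = (\<Prod>i\<in>J. fb (\<alpha> i) (x i))"
      unfolding G_def by (intro prod.cong) (auto simp: lift_comp in_J)
  qed
  moreover have "integrable (PiM J (\<lambda>_. lborel)) (\<lambda>x. \<Prod>i\<in>J. fb (\<alpha> i) (x i))"
    by (rule product_integrable_prod) (auto intro: fb_int alpha_pos)
  ultimately show ?thesis by simp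
next
  case False
  interpret product_sigma_finite "\<lambda>_. lborel :: real measure" by standard
  have kJ: "k \<in> J" using False by (simp add: in_J)
  define J' where "J' = J - {k}"
  have J': "J = insert k J'" "k \<notin> J'" "finite J'" "l \<notin> J'" using kJ by (auto simp: J'_def)
  define I where "I = (\<lambda>i. \<integral>\<^sup>+t. ennreal (fb (\<alpha> i) t) \<partial>lborel)"
  have I: "I i = ennreal (1 / \<alpha> i)" for i unfolding I_def by (rule fb_nn_int[OF alpha_pos])
  have Gupd: "G k (x(k := t)) = fb (\<alpha> l) ((1 - (\<Sum>j\<in>J'. x j)) + (-1) * t) * (\<Prod>i\<in>J'. fb (\<alpha> i) (x i))" for x t
  proof -
    have U: "UNIV - {k} = insert l J'" using J' False by (auto simp: J_def)
    have sJ': "(\<Sum>j\<in>J'. (x(k := t)) j) = (\<Sum>j\<in>J'. x j)" by (rule sum.cong) (use J' in auto)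
    have "lift_simplex (x(k := t)) l = 1 - (t + (\<Sum>j\<in>J'. x j))"
      unfolding lift_comp J'(1) using J'(2,3) sJ' by (simp add: sum.insert)
    then have Ll: "lift_simplex (x(k := t)) l = (1 - (\<Sum>j\<in>J'. x j)) + (-1) * t" by simp
    have P: "(\<Prod>i\<in>J'. fb (\<alpha> i) (lift_simplex (x(k := t)) i)) = (\<Prod>i\<in>J'. fb (\<alpha> i) (x i))"
      using J' by (intro prod.cong refl) (auto simp: lift_comp in_J)
    show ?thesis unfolding G_def U prod.insert[OF J'(3) J'(4)] Ll P by (rule refl)
  qed
  have "(\<integral>\<^sup>+x. ennreal (G k x) \<partial>PiM J (\<lambda>_. lborel)) = (\<integral>\<^sup>+x. (\<integral>\<^sup>+t. ennreal (G k (x(k := t))) \<partial>lborel) \<partial>PiM J' (\<lambda>_. lborel))"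
    unfolding J'(1) using J' by (subst product_nn_integral_insert) (auto simp: J'(1)[symmetric])
  also have "\<dots> = (\<integral>\<^sup>+x. I l * (\<Prod>i\<in>J'. ennreal (fb (\<alpha> i) (x i))) \<partial>PiM J' (\<lambda>_. lborel))"
  proof (rule nn_integral_cong)
    fix x :: "'k \<Rightarrow> real"
    have "(\<integral>\<^sup>+t. ennreal (G k (x(k := t))) \<partial>lborel)
        = (\<integral>\<^sup>+t. ennreal (\<Prod>i\<in>J'. fb (\<alpha> i) (x i)) * ennreal (fb (\<alpha> l) ((1 - (\<Sum>j\<in>J'. x j)) + (-1) * t)) \<partial>lborel)"
      unfolding Gupd by (intro nn_integral_cong) (simp add: ennreal_mult[symmetric] fb_nn prod_nonneg mult.commute)
    also have "\<dots> = ennreal (\<Prod>i\<in>J'. fb (\<alpha> i) (x i)) * (\<integral>\<^sup>+t. ennreal (fb (\<alpha> l) ((1 - (\<Sum>j\<in>J'. x j)) + (-1) * t)) \<partial>lborel)"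
      by (rule nn_integral_cmult) simp
    also have "(\<integral>\<^sup>+t. ennreal (fb (\<alpha> l) ((1 - (\<Sum>j\<in>J'. x j)) + (-1) * t)) \<partial>lborel) = I l"
      unfolding I_def using nn_integral_real_affine[of "\<lambda>t. ennreal (fb (\<alpha> l) t)" "-1" "1 - (\<Sum>j\<in>J'. x j)"]
      by simp
    finally show "(\<integral>\<^sup>+t. ennreal (G k (x(k := t))) \<partial>lborel) = I l * (\<Prod>i\<in>J'. ennreal (fb (\<alpha> i) (x i)))"
      by (simp add: prod_ennreal fb_nn mult.commute fun_upd_def)
  qed
  also have "\<dots> = I l * (\<integral>\<^sup>+x. (\<Prod>i\<in>J'. ennreal (fb (\<alpha> i) (x i))) \<partial>PiM J' (\<lambda>_. lborel))"
    by (rule nn_integral_cmult) (use J' in simp)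
  also have "(\<integral>\<^sup>+x. (\<Prod>i\<in>J'. ennreal (fb (\<alpha> i) (x i))) \<partial>PiM J' (\<lambda>_. lborel)) = (\<Prod>i\<in>J'. I i)"
    unfolding I_def by (rule product_nn_integral_prod) (use J' in auto)
  also have "I l * (\<Prod>i\<in>J'. I i) = ennreal (1 / \<alpha> l * (\<Prod>i\<in>J'. 1 / \<alpha> i))"
    unfolding I using alpha_pos by (simp add: prod_ennreal ennreal_mult[symmetric] less_imp_le prod_nonneg)
  finally have "(\<integral>\<^sup>+x. ennreal (G k x) \<partial>PiM J (\<lambda>_. lborel)) < \<infinity>" by simp
  then show ?thesis
    by (intro Bochner_Integration.integrableI_nonneg) (auto simp: G_nn)
qed

lemma w_int: "integrable (PiM J (\<lambda>_. lborel)) w"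
proof (rule Bochner_Integration.integrable_bound)
  show "integrable (PiM J (\<lambda>_. lborel)) (\<lambda>x. \<Sum>k\<in>UNIV. (Ck k / mbeta \<alpha>) * G k x)"
    by (intro Bochner_Integration.integrable_sum Bochner_Integration.integrable_mult_right G_int)
  show "AE x in PiM J (\<lambda>_. lborel). norm (w x) \<le> norm (\<Sum>k\<in>UNIV. (Ck k / mbeta \<alpha>) * G k x)"
  proof (rule AE_I2)
    fix x
    show "norm (w x) \<le> norm (\<Sum>k\<in>UNIV. (Ck k / mbeta \<alpha>) * G k x)"
      using order_trans[OF w_bound[of x] abs_ge_self] w_nn[of x] by simp
  qed
qed simp


definition AJ :: "('k \<Rightarrow> 'k \<Rightarrow> real) \<Rightarrow> 'k \<Rightarrow> 'k \<Rightarrow> real" where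
  "AJ N i j = N i j - N i l - N l j + N l l"

lemma quad_hat: "(\<Sum>i\<in>UNIV. \<Sum>j\<in>UNIV. hat y i * N i j * hat y j) = qf J (AJ N) y"
proof -
  define S where "S = (\<Sum>j\<in>J. y j)"
  have hl: "hat y l = - S" by (simp add: hat_def S_def)
  have hj: "hat y j = y j" if "j \<in> J" for j using that by (simp add: hat_def in_J)
  have inner: "(\<Sum>j\<in>UNIV. hat y i * N i j * hat y j) = - S * hat y i * N i l + (\<Sum>j\<in>J. hat y i * N i j * y j)" for i
    by (simp add: sum_UNIV_split hl hj cong: sum.cong)
  have "(\<Sum>i\<in>UNIV. \<Sum>j\<in>UNIV. hat y i * N i j * hat y j)
      = (\<Sum>i\<in>UNIV. - S * hat y i * N i l + (\<Sum>j\<in>J. hat y i * N i j * y j))"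
    by (simp only: inner)
  also have "\<dots> = (- S * hat y l * N l l + (\<Sum>j\<in>J. hat y l * N l j * y j)) + (\<Sum>i\<in>J. - S * hat y i * N i l + (\<Sum>j\<in>J. hat y i * N i j * y j))"
    by (rule sum_UNIV_split)
  also have "\<dots> = (- S * hat y l * N l l + (\<Sum>j\<in>J. hat y l * N l j * y j)) + (\<Sum>i\<in>J. - S * y i * N i l + (\<Sum>j\<in>J. y i * N i j * y j))"
    by (simp add: hj cong: sum.cong)
  also have "\<dots> = S * S * N l l - S * (\<Sum>j\<in>J. N l j * y j) - S * (\<Sum>i\<in>J. y i * N i l) + qf J N y"
  proof -
    have e1: "(\<Sum>i\<in>J. - S * y i * N i l + (\<Sum>j\<in>J. y i * N i j * y j)) = (\<Sum>i\<in>J. - S * y i * N i l) + qf J N y"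
      unfolding qf_def by (rule sum.distrib)
    have e2: "(\<Sum>i\<in>J. - S * y i * N i l) = - S * (\<Sum>i\<in>J. y i * N i l)"
      by (simp add: sum_distrib_left mult.assoc)
    have e3: "(\<Sum>j\<in>J. hat y l * N l j * y j) = - S * (\<Sum>j\<in>J. N l j * y j)"
      unfolding hl by (simp add: sum_distrib_left mult.assoc)
    have e4: "- S * hat y l * N l l = S * S * N l l" unfolding hl by simp
    show ?thesis unfolding e1 e2 e3 e4 by simp
  qed
  also have "\<dots> = qf J (AJ N) y"
  proof -
    have "qf J (AJ N) y = qf J N y - (\<Sum>i\<in>J. \<Sum>j\<in>J. y i * N i l * y j) - (\<Sum>i\<in>J. \<Sum>j\<in>J. y i * N l j * y j) + (\<Sum>i\<in>J. \<Sum>j\<in>J. y i * N l l * y j)"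
      unfolding qf_def AJ_def by (simp add: algebra_simps sum_subtractf sum.distrib)
    also have "(\<Sum>i\<in>J. \<Sum>j\<in>J. y i * N i l * y j) = (\<Sum>i\<in>J. y i * N i l) * S"
      unfolding S_def by (simp add: sum_distrib_left sum_distrib_right mult_ac)
    also have "(\<Sum>i\<in>J. \<Sum>j\<in>J. y i * N l j * y j) = S * (\<Sum>j\<in>J. N l j * y j)"
      unfolding S_def sum_distrib_right by (simp add: sum_distrib_left mult_ac)
    also have "(\<Sum>i\<in>J. \<Sum>j\<in>J. y i * N l l * y j) = S * S * N l l"
      unfolding S_def by (simp add: sum_distrib_left sum_distrib_right mult_ac)
    finally show ?thesis by simp
  qed
  finally show ?thesis .
qed


lemma sum_J_ts: "(\<Sum>j\<in>J. \<theta>s j) = 1 - \<theta>s l"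
  using ts_sum sum_UNIV_split[of \<theta>s] by simp

definition Pm :: "real^'k^'k" where
  "Pm = (\<chi> i b. if b = l then \<theta>s i else (if i = b then 1 else 0) - (if i = l then 1 else 0))"

lemma det_Pm: "det Pm = 1"
proof -
  define M0 :: "real^'k^'k" where
    "M0 = (\<chi> a b. if a = l then (if b = l then 1 else 0) else (if a = b then 1 else 0) - (if b = l then 1 else 0))"
  define x0 :: "real^'k" where "x0 = (\<Sum>j\<in>J. \<theta>s j *s row j M0)"
  have x0b: "x0 $ b = (if b = l then - (1 - \<theta>s l) else \<theta>s b)" for b
  proof -
    have "x0 $ b = (\<Sum>j\<in>J. \<theta>s j * ((if j = b then 1 else 0) - (if b = l then 1 else 0)))"
      unfolding x0_def sum_component by (intro sum.cong refl) (auto simp: row_def M0_def in_J)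
    also have "\<dots> = (\<Sum>j\<in>J. if j = b then \<theta>s j else 0) - (if b = l then 1 else 0) * (\<Sum>j\<in>J. \<theta>s j)"
      by (simp add: right_diff_distrib sum_subtractf sum_distrib_right mult.commute if_distrib[of "\<lambda>t. _ * t"] cong: if_cong)
    also have "\<dots> = (if b = l then - (1 - \<theta>s l) else \<theta>s b)"
      by (simp add: sum_J_ts in_J)
    finally show ?thesis .
  qed
  have x0s: "x0 \<in> vec.span {row j M0 |j. j \<noteq> l}"
    unfolding x0_def by (intro vec.span_sum vec.span_scale vec.span_base) (auto simp: in_J)
  have T1: "transpose Pm = (\<chi> k. if k = l then row l M0 + x0 else row k M0)"
    by (auto simp: vec_eq_iff transpose_def Pm_def M0_def row_def x0b)
  have d1: "det (transpose Pm) = det M0"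
    unfolding T1 by (rule det_row_span[OF x0s])
  define x1 :: "real^'k" where "x1 = - (\<Sum>j\<in>J. row j (mat 1 :: real^'k^'k))"
  have x1b: "x1 $ b = (if b \<in> J then -1 else 0)" for b
    unfolding x1_def by (simp add: row_def mat_def sum.delta cong: if_cong)
  have x1s: "x1 \<in> vec.span {row j (mat 1 :: real^'k^'k) |j. j \<noteq> l}"
    unfolding x1_def by (intro vec.span_neg vec.span_sum vec.span_base) (auto simp: in_J)
  have T2: "transpose M0 = (\<chi> k. if k = l then row l (mat 1) + x1 else row k (mat 1))"
    by (auto simp: vec_eq_iff transpose_def M0_def row_def mat_def x1b in_J)
  have d2: "det (transpose M0) = 1"
    unfolding T2 using det_row_span[OF x1s] by simp
  show ?thesis using d1 d2 by simp
qed

lemma det_block: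
  assumes symN: "\<And>i j. N i j = N j i" and cN: "\<And>i. (\<Sum>j\<in>UNIV. N i j * \<theta>s j) = c"
  shows "det (\<chi> i j. N i j :: real^'k^'k) = c * detE J (AJ N)"
proof -
  define Nm :: "real^'k^'k" where "Nm = (\<chi> i j. N i j)"
  define E where "E = embM J (AJ N)"
  have NP: "(Nm ** Pm) $ i $ b = (if b = l then c else N i b - N i l)" for i b
  proof (cases "b = l")
    case True
    then show ?thesis unfolding matrix_matrix_mult_def Nm_def Pm_def using cN[of i] by simp
  next
    case False
    have "(Nm ** Pm) $ i $ b = (\<Sum>j\<in>UNIV. N i j * ((if j = b then 1 else 0) - (if j = l then 1 else 0)))"
      unfolding matrix_matrix_mult_def Nm_def Pm_def using False by simp
    also have "\<dots> = N i b - N i l"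
      by (simp add: right_diff_distrib sum_subtractf if_distrib[of "\<lambda>t. _ * t"] sum.delta cong: if_cong)
    finally show ?thesis using False by simp
  qed
  have PtX: "(transpose Pm ** X) $ a $ b = (if a = l then (\<Sum>i\<in>UNIV. \<theta>s i * X $ i $ b) else X $ a $ b - X $ l $ b)" for X a b
  proof (cases "a = l")
    case True
    then show ?thesis unfolding matrix_matrix_mult_def transpose_def Pm_def by simp
  next
    case False
    have "(transpose Pm ** X) $ a $ b = (\<Sum>i\<in>UNIV. ((if i = a then 1 else 0) - (if i = l then 1 else 0)) * X $ i $ b)"
      unfolding matrix_matrix_mult_def transpose_def Pm_def using False by simp
    also have "\<dots> = X $ a $ b - X $ l $ b"
      by (simp add: left_diff_distrib sum_subtractf if_distrib[of "\<lambda>t. t * _"] sum.delta cong: if_cong)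
    finally show ?thesis using False by simp
  qed
  have cT: "(\<Sum>i\<in>UNIV. \<theta>s i * N i b) = c" for b
    using cN[of b] by (simp add: symN[of _ b] mult.commute)
  have eq: "transpose Pm ** (Nm ** Pm) = (\<chi> a. if a = l then c *s row l E else row a E)"
  proof -
    have "(transpose Pm ** (Nm ** Pm)) $ a $ b = (if a = l then c * E $ l $ b else E $ a $ b)" for a b
    proof (cases "a = l")
      case True
      show ?thesis
      proof (cases "b = l")
        case True
        then show ?thesis using \<open>a = l\<close> unfolding PtX NP
          by (simp add: E_def embM_def sum_distrib_right[symmetric] ts_sum)
      next
        case False
        have "(\<Sum>i\<in>UNIV. \<theta>s i * (N i b - N i l)) = (\<Sum>i\<in>UNIV. \<theta>s i * N i b) - (\<Sum>i\<in>UNIV. \<theta>s i * N i l)"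
          by (simp add: right_diff_distrib sum_subtractf)
        then show ?thesis using \<open>a = l\<close> False unfolding PtX NP by (simp add: E_def embM_def cT)
      qed
    next
      case False
      then show ?thesis unfolding PtX NP
        by (cases "b = l") (auto simp: E_def embM_def AJ_def in_J)
    qed
    then show ?thesis by (simp add: vec_eq_iff row_def)
  qed
  have "det (transpose Pm ** (Nm ** Pm)) = det Nm" by (simp add: det_mul det_Pm)
  also have "det (transpose Pm ** (Nm ** Pm)) = c * det (\<chi> a. if a = l then row l E else row a E)"
    unfolding eq by (rule det_row_mul)
  also have "(\<chi> a. if a = l then row l E else row a E) = E" by (simp add: vec_eq_iff row_def)
  finally show ?thesis unfolding Nm_def E_def detE_def by simp
qed


definition Rm where "Rm i j = (if i = j then - 1 / \<theta>s i else 0)"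
definition NQ where "NQ i j = - Qm i j"
definition NR where "NR i j = - Rm i j"
definition AQ where "AQ = AJ NQ"
definition AR where "AR = AJ NR"

lemma Qm_sym: "Qm i j = Qm j i" unfolding Qm_def by (simp add: mult_ac)

lemma qX_qf: "qX y = qf J AQ y"
proof -
  have "qX y = - (\<Sum>i\<in>UNIV. \<Sum>j\<in>UNIV. hat y i * Qm i j * hat y j)" unfolding qX_def by (rule qQd_hess)
  also have "\<dots> = (\<Sum>i\<in>UNIV. \<Sum>j\<in>UNIV. hat y i * NQ i j * hat y j)" by (simp add: NQ_def sum_negf)
  also have "\<dots> = qf J AQ y" unfolding AQ_def by (rule quad_hat)
  finally show ?thesis .
qed

lemma qY_qf: "qY y = qf J AR y"
proof -
  have tt: "hat y i * NR i j * hat y j = (if j = i then hat y i * hat y i / \<theta>s i else 0)" for i j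
    by (auto simp: NR_def Rm_def)
  have "(\<Sum>i\<in>UNIV. \<Sum>j\<in>UNIV. hat y i * NR i j * hat y j) = (\<Sum>i\<in>UNIV. hat y i * hat y i / \<theta>s i)"
    unfolding tt by (simp add: sum.delta)
  also have "\<dots> = qY y" unfolding qY_def qR_def
    by (intro sum.cong refl) (use ts_pos in \<open>simp add: power2_eq_square field_simps\<close>)
  finally show ?thesis unfolding AR_def quad_hat by simp
qed

lemma hat_nz: "i \<in> J \<Longrightarrow> y i \<noteq> 0 \<Longrightarrow> \<exists>k. hat y k \<noteq> 0"
  by (rule exI[of _ i]) (simp add: hat_def in_J)

lemma AJ_sym: assumes "\<And>i j. N i j = N j i" shows "AJ N i j = AJ N j i"
  using assms[of i j] assms[of i l] assms[of l j] by (simp add: AJ_def)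

lemma posdef_AQ: "posdefJ J AQ"
  unfolding posdefJ_def
proof safe
  fix i j show "AQ i j = AQ j i" unfolding AQ_def by (rule AJ_sym) (simp add: NQ_def Qm_sym)
next
  fix y :: "'k \<Rightarrow> real" and i assume "i \<in> J" "y i \<noteq> 0"
  then have "0 < qQd (hat y)" by (intro qQd_pos hat_nz hat_sum)
  then show "0 < qf J AQ y" using qX_qf qX_def by simp
qed

lemma qR_pos: "(\<exists>k. d k \<noteq> 0) \<Longrightarrow> 0 < qR d"
proof -
  assume "\<exists>k. d k \<noteq> 0"
  then obtain k where k: "d k \<noteq> 0" by blast
  have "0 < \<theta>s k * (d k / \<theta>s k)\<^sup>2" using k ts_pos[of k] by simp
  also have "\<dots> \<le> qR d" unfolding qR_def
    by (rule member_le_sum) (auto intro!: mult_nonneg_nonneg simp: less_imp_le[OF ts_pos])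
  finally show ?thesis .
qed

lemma posdef_AR: "posdefJ J AR"
  unfolding posdefJ_def
proof safe
  fix i j show "AR i j = AR j i" unfolding AR_def by (rule AJ_sym) (simp add: NR_def Rm_def)
next
  fix y :: "'k \<Rightarrow> real" and i assume "i \<in> J" "y i \<noteq> 0"
  then have "0 < qR (hat y)" by (intro qR_pos hat_nz)
  then show "0 < qf J AR y" using qY_qf qY_def by simp
qed

lemma cNQ: "(\<Sum>j\<in>UNIV. NQ i j * \<theta>s j) = 1"
proof -
  have "(\<Sum>j\<in>UNIV. NQ i j * \<theta>s j) = (\<Sum>j\<in>UNIV. \<Sum>v\<in>UNIV. \<theta>s j * (p v * \<phi> i v * \<phi> j v / (s v)\<^sup>2))"
    unfolding NQ_def Qm_def by (simp add: sum_distrib_left mult.commute)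
  also have "\<dots> = (\<Sum>v\<in>UNIV. \<Sum>j\<in>UNIV. \<theta>s j * (p v * \<phi> i v * \<phi> j v / (s v)\<^sup>2))" by (rule sum.swap)
  also have "\<dots> = (\<Sum>v\<in>UNIV. (p v * \<phi> i v / (s v)\<^sup>2) * (\<Sum>j\<in>UNIV. \<theta>s j * \<phi> j v))"
    unfolding sum_distrib_left by (intro sum.cong refl) (simp add: field_simps)
  also have "\<dots> = (\<Sum>v\<in>UNIV. p v * \<phi> i v / s v)"
    by (intro sum.cong refl) (use s_pos in \<open>simp add: s_def[symmetric] power2_eq_square\<close>)
  also have "\<dots> = 1" using g_one[of i] by (simp add: g_def)
  finally show ?thesis .
qed

lemma cNR: "(\<Sum>j\<in>UNIV. NR i j * \<theta>s j) = 1"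
proof -
  have "NR i j * \<theta>s j = (if j = i then 1 else 0)" for j
    using ts_pos[of i] by (auto simp: NR_def Rm_def)
  then show ?thesis by (simp add: sum.delta)
qed

lemma det_NQ: "det (\<chi> i j. NQ i j :: real^'k^'k) = detE J AQ"
  using det_block[of NQ 1] cNQ unfolding AQ_def by (simp add: NQ_def Qm_sym)

lemma det_NR: "det (\<chi> i j. NR i j :: real^'k^'k) = detE J AR"
  using det_block[of NR 1] cNR unfolding AR_def by (simp add: NR_def Rm_def)

lemma det_NS: "det (\<chi> i j. NQ i j + NR i j :: real^'k^'k) = 2 * detE J (\<lambda>i j. AQ i j + AR i j)"
proof -
  have "det (\<chi> i j. NQ i j + NR i j :: real^'k^'k) = 2 * detE J (AJ (\<lambda>i j. NQ i j + NR i j))"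
  proof (rule det_block)
    show "\<And>i j. NQ i j + NR i j = NQ j i + NR j i" by (auto simp: NQ_def NR_def Rm_def Qm_sym)
    show "\<And>i. (\<Sum>j\<in>UNIV. (NQ i j + NR i j) * \<theta>s j) = 2"
      unfolding distrib_right sum.distrib cNQ cNR by simp
  qed
  also have "AJ (\<lambda>i j. NQ i j + NR i j) = (\<lambda>i j. AQ i j + AR i j)"
    by (auto simp: AJ_def AQ_def AR_def fun_eq_iff)
  finally show ?thesis .
qed


lemma w_nz_simplex: "w x \<noteq> 0 \<Longrightarrow> lift_simplex x \<in> prob_simplex"
  unfolding w_def dir_density_def by (auto split: if_splits)

lemma lap_inst:
  assumes Em[measurable]: "E \<in> borel_measurable (PiM J (\<lambda>_. lborel))" and Enn: "\<And>x. 0 \<le> E x"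
    and c: "c > 0" and Eb: "\<And>x. lift_simplex x \<in> prob_simplex \<Longrightarrow> E x \<le> exp (- c * (\<Sum>j\<in>J. (x j - \<theta>s j)\<^sup>2))"
    and El: "\<And>y. (\<lambda>n. E (\<lambda>j\<in>J. \<theta>s j + y j / sqrt n) ^ n) \<longlonglongrightarrow> exp (- qf J A y / 2)"
  shows "(\<lambda>n. sqrt n ^ card J * (\<integral>x. E x ^ n * w x \<partial>PiM J (\<lambda>_. lborel))) \<longlonglongrightarrow> dir_density \<alpha> \<theta>s * (\<integral>y. exp (- qf J A y / 2) \<partial>PiM J (\<lambda>_. lborel))"
proof -
  obtain \<delta> W where \<delta>: "\<delta> > 0" and WW: "\<And>x. (\<Sum>j\<in>J. (x j - \<theta>s j)\<^sup>2) < \<delta> \<Longrightarrow> w x \<le> W"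
    using w_loc by blast
  show ?thesis
  proof (rule laplace[OF J_fin w_meas Em measurable_qf[OF J_fin] w_nn w_int Enn c _ \<delta>])
    show "E x \<le> exp (- c * (\<Sum>j\<in>J. (x j - \<theta>s j)\<^sup>2))" if "x \<in> space (PiM J (\<lambda>_. lborel))" "w x \<noteq> 0" for x
      using Eb w_nz_simplex that by blast
    show "w x \<le> W" if "x \<in> space (PiM J (\<lambda>_. lborel))" "(\<Sum>j\<in>J. (x j - \<theta>s j)\<^sup>2) < \<delta>" for x
      using WW that by blast
    show "(\<lambda>n. E (\<lambda>j\<in>J. \<theta>s j + y j / sqrt n) ^ n * w (\<lambda>j\<in>J. \<theta>s j + y j / sqrt n)) \<longlonglongrightarrow> exp (- qf J A y / 2) * dir_density \<alpha> \<theta>s" for y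
      by (intro tendsto_mult El w_lim)
  qed
qed

lemma Ex1f_nn: "0 \<le> Ex1f x" by (simp add: Ex1f_def)
lemma Ey1f_nn: "0 \<le> Ey1f x" by (simp add: Ey1f_def)

lemma exp_mult_bound:
  fixes a b c1 c2 S :: real
  assumes "0 \<le> a" "a \<le> exp (- c1 * S)" "0 \<le> b" "b \<le> exp (- c2 * S)"
  shows "a * b \<le> exp (- (c1 + c2) * S)"
proof -
  have "a * b \<le> exp (- c1 * S) * exp (- c2 * S)" using assms by (intro mult_mono) auto
  also have "\<dots> = exp (- (c1 + c2) * S)" by (simp add: exp_add[symmetric] algebra_simps)
  finally show ?thesis .
qed

definition AS where "AS = (\<lambda>i j. AQ i j + AR i j)"
definition AQ2 where "AQ2 = (\<lambda>i j. 2 * AQ i j)"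
definition AR2 where "AR2 = (\<lambda>i j. 2 * AR i j)"

lemma lap_XY: "(\<lambda>n. sqrt n ^ card J * (\<integral>x. (Ex1f x * Ey1f x) ^ n * w x \<partial>PiM J (\<lambda>_. lborel))) \<longlonglongrightarrow> dir_density \<alpha> \<theta>s * (\<integral>y. exp (- qf J AS y / 2) \<partial>PiM J (\<lambda>_. lborel))"
proof (rule lap_inst)
  show "(\<lambda>x. Ex1f x * Ey1f x) \<in> borel_measurable (PiM J (\<lambda>_. lborel))" by measurable
  show "0 \<le> Ex1f x * Ey1f x" for x by (simp add: Ex1f_nn Ey1f_nn)
  show "0 < cQ + cR" using cQ_pos cR_pos by simp
  show "Ex1f x * Ey1f x \<le> exp (- (cQ + cR) * (\<Sum>j\<in>J. (x j - \<theta>s j)\<^sup>2))" if "lift_simplex x \<in> prob_simplex" for x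
    by (rule exp_mult_bound[OF Ex1f_nn EX_bound[OF that] Ey1f_nn EY_bound[OF that]])
  fix y
  have "(\<lambda>n. Ex1f (\<lambda>j\<in>J. \<theta>s j + y j / sqrt n) ^ n * Ey1f (\<lambda>j\<in>J. \<theta>s j + y j / sqrt n) ^ n) \<longlonglongrightarrow> exp (- qX y / 2) * exp (- qY y / 2)"
    by (intro tendsto_mult Ex1f_lim Ey1f_lim)
  moreover have "exp (- qX y / 2) * exp (- qY y / 2) = exp (- qf J AS y / 2)"
    unfolding AS_def qf_add qX_qf qY_qf by (simp add: exp_add[symmetric] add_divide_distrib)
  ultimately show "(\<lambda>n. (Ex1f (\<lambda>j\<in>J. \<theta>s j + y j / sqrt n) * Ey1f (\<lambda>j\<in>J. \<theta>s j + y j / sqrt n)) ^ n) \<longlonglongrightarrow> exp (- qf J AS y / 2)"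
    by (simp add: power_mult_distrib)
qed

lemma lap_XX: "(\<lambda>n. sqrt n ^ card J * (\<integral>x. (Ex1f x * Ex1f x) ^ n * w x \<partial>PiM J (\<lambda>_. lborel))) \<longlonglongrightarrow> dir_density \<alpha> \<theta>s * (\<integral>y. exp (- qf J AQ2 y / 2) \<partial>PiM J (\<lambda>_. lborel))"
proof (rule lap_inst)
  show "(\<lambda>x. Ex1f x * Ex1f x) \<in> borel_measurable (PiM J (\<lambda>_. lborel))" by measurable
  show "0 \<le> Ex1f x * Ex1f x" for x by (simp add: Ex1f_nn)
  show "0 < cQ + cQ" using cQ_pos by simp
  show "Ex1f x * Ex1f x \<le> exp (- (cQ + cQ) * (\<Sum>j\<in>J. (x j - \<theta>s j)\<^sup>2))" if "lift_simplex x \<in> prob_simplex" for x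
    by (rule exp_mult_bound[OF Ex1f_nn EX_bound[OF that] Ex1f_nn EX_bound[OF that]])
  fix y
  have "(\<lambda>n. Ex1f (\<lambda>j\<in>J. \<theta>s j + y j / sqrt n) ^ n * Ex1f (\<lambda>j\<in>J. \<theta>s j + y j / sqrt n) ^ n) \<longlonglongrightarrow> exp (- qX y / 2) * exp (- qX y / 2)"
    by (intro tendsto_mult Ex1f_lim)
  moreover have "exp (- qX y / 2) * exp (- qX y / 2) = exp (- qf J AQ2 y / 2)"
    unfolding AQ2_def qf_scale qX_qf by (simp add: exp_add[symmetric])
  ultimately show "(\<lambda>n. (Ex1f (\<lambda>j\<in>J. \<theta>s j + y j / sqrt n) * Ex1f (\<lambda>j\<in>J. \<theta>s j + y j / sqrt n)) ^ n) \<longlonglongrightarrow> exp (- qf J AQ2 y / 2)"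
    by (simp add: power_mult_distrib)
qed

lemma lap_YY: "(\<lambda>n. sqrt n ^ card J * (\<integral>x. (Ey1f x * Ey1f x) ^ n * w x \<partial>PiM J (\<lambda>_. lborel))) \<longlonglongrightarrow> dir_density \<alpha> \<theta>s * (\<integral>y. exp (- qf J AR2 y / 2) \<partial>PiM J (\<lambda>_. lborel))"
proof (rule lap_inst)
  show "(\<lambda>x. Ey1f x * Ey1f x) \<in> borel_measurable (PiM J (\<lambda>_. lborel))" by measurable
  show "0 \<le> Ey1f x * Ey1f x" for x by (simp add: Ey1f_nn)
  show "0 < cR + cR" using cR_pos by simp
  show "Ey1f x * Ey1f x \<le> exp (- (cR + cR) * (\<Sum>j\<in>J. (x j - \<theta>s j)\<^sup>2))" if "lift_simplex x \<in> prob_simplex" for x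
    by (rule exp_mult_bound[OF Ey1f_nn EY_bound[OF that] Ey1f_nn EY_bound[OF that]])
  fix y
  have "(\<lambda>n. Ey1f (\<lambda>j\<in>J. \<theta>s j + y j / sqrt n) ^ n * Ey1f (\<lambda>j\<in>J. \<theta>s j + y j / sqrt n) ^ n) \<longlonglongrightarrow> exp (- qY y / 2) * exp (- qY y / 2)"
    by (intro tendsto_mult Ey1f_lim)
  moreover have "exp (- qY y / 2) * exp (- qY y / 2) = exp (- qf J AR2 y / 2)"
    unfolding AR2_def qf_scale qY_qf by (simp add: exp_add[symmetric])
  ultimately show "(\<lambda>n. (Ey1f (\<lambda>j\<in>J. \<theta>s j + y j / sqrt n) * Ey1f (\<lambda>j\<in>J. \<theta>s j + y j / sqrt n)) ^ n) \<longlonglongrightarrow> exp (- qf J AR2 y / 2)"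
    by (simp add: power_mult_distrib)
qed

lemma lap_X: "(\<lambda>n. sqrt n ^ card J * (\<integral>x. Ex1f x ^ n * w x \<partial>PiM J (\<lambda>_. lborel))) \<longlonglongrightarrow> dir_density \<alpha> \<theta>s * (\<integral>y. exp (- qf J AQ y / 2) \<partial>PiM J (\<lambda>_. lborel))"
proof (rule lap_inst[OF Ex1f_meas Ex1f_nn cQ_pos EX_bound])
  fix y :: "'k \<Rightarrow> real"
  show "(\<lambda>n. Ex1f (\<lambda>j\<in>J. \<theta>s j + y j / sqrt n) ^ n) \<longlonglongrightarrow> exp (- qf J AQ y / 2)"
    using Ex1f_lim[of y] unfolding qX_qf .
qed

lemma lap_Y: "(\<lambda>n. sqrt n ^ card J * (\<integral>x. Ey1f x ^ n * w x \<partial>PiM J (\<lambda>_. lborel))) \<longlonglongrightarrow> dir_density \<alpha> \<theta>s * (\<integral>y. exp (- qf J AR y / 2) \<partial>PiM J (\<lambda>_. lborel))"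
proof (rule lap_inst[OF Ey1f_meas Ey1f_nn cR_pos EY_bound])
  fix y :: "'k \<Rightarrow> real"
  show "(\<lambda>n. Ey1f (\<lambda>j\<in>J. \<theta>s j + y j / sqrt n) ^ n) \<longlonglongrightarrow> exp (- qf J AR y / 2)"
    using Ey1f_lim[of y] unfolding qY_qf .
qed


lemma card_J: "card J = CARD('k) - 1"
  unfolding J_def by (simp add: card_Diff_singleton)

lemma card_J_pos: "card J \<ge> 1" using K2 card_J by simp

lemma w0_pos: "0 < dir_density \<alpha> \<theta>s"
  unfolding dens_simplex[OF ts_simplex] using mbeta_pos ts_pos
  by (intro divide_pos_pos prod_pos) (auto simp: ts_pos[THEN less_imp_neq, symmetric])

lemma dir_expect_J: "dir_expect \<alpha> f = (\<integral>x. f (lift_simplex x) * w x \<partial>PiM J (\<lambda>_. lborel))"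
  unfolding dir_expect_def w_def J_def l_def by simp

lemma X_lift: "exp (real n * lda_H \<phi> p (lift_simplex x)) = exp (real n * Hs) * Ex1f x ^ n"
proof -
  have "Ex1f x ^ n = exp (real n * (lda_H \<phi> p (lift_simplex x) - Hs))"
    unfolding Ex1f_def by (simp add: exp_of_nat_mult)
  then show ?thesis by (simp add: exp_add[symmetric] algebra_simps)
qed

lemma Y_lift:
  assumes n: "n \<ge> 1"
  shows "exp_Hhat (real n) Hs \<theta>s (lift_simplex x) = exp (real n * Hs) * Ey1f x ^ n"
proof (cases "\<forall>k. 0 < lift_simplex x k")
  case True
  have "Ey1f x ^ n = exp (- KL \<theta>s (lift_simplex x)) ^ n"
    unfolding Ey1f_def using True by simp
  also have "\<dots> = exp (real n * (- KL \<theta>s (lift_simplex x)))" by (rule exp_of_nat_mult[symmetric])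
  finally have "Ey1f x ^ n = exp (real n * (- KL \<theta>s (lift_simplex x)))" .
  then show ?thesis unfolding exp_Hhat_def using True by (simp add: exp_add[symmetric] algebra_simps)
next
  case False
  then show ?thesis unfolding exp_Hhat_def Ey1f_def using n by auto
qed

definition Gs where "Gs A = (\<integral>y. exp (- qf J A y / 2) \<partial>PiM J (\<lambda>_. lborel))"

lemma posdef_AS: "posdefJ J AS" unfolding AS_def by (intro posdef_add posdef_AQ posdef_AR)
lemma posdef_AQ2: "posdefJ J AQ2" unfolding AQ2_def by (intro posdef_scale posdef_AQ) simp
lemma posdef_AR2: "posdefJ J AR2" unfolding AR2_def by (intro posdef_scale posdef_AR) simp

lemma Gs_val: "posdefJ J A \<Longrightarrow> Gs A = (2*pi) powr (card J / 2) / sqrt (detE J A)"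
  unfolding Gs_def by (rule gaussJ_int(1))

lemma Gs_pos: "posdefJ J A \<Longrightarrow> Gs A > 0"
  using gaussJ_int(2)[of J A] by (simp add: Gs_val)

theorem main_limit:
  "(\<lambda>n::nat. (dir_corr \<alpha> (\<lambda>\<theta>. exp (real n * lda_H \<phi> p \<theta>))
                             (exp_Hhat (real n) (lda_H \<phi> p \<theta>s) \<theta>s))\<^sup>2)
         \<longlonglongrightarrow>
         (let Q = (\<chi> i j. hessian (lda_H \<phi> p) \<theta>s i j) :: real^'k^'k;
              R = (\<chi> i j. if i = j then - 1 / \<theta>s i else 0) :: real^'k^'k
          in sqrt \<bar>det Q\<bar> * sqrt \<bar>det R\<bar> / \<bar>det ((1/2) *\<^sub>R (Q + R))\<bar>)"
proof -
  let ?M = "PiM J (\<lambda>_. lborel :: real measure)"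
  define m where "m = card J"
  define sq where "sq = (\<lambda>n::nat. sqrt (real n) ^ m)"
  define IXY where "IXY = (\<lambda>n. \<integral>x. (Ex1f x * Ey1f x) ^ n * w x \<partial>?M)"
  define IXX where "IXX = (\<lambda>n. \<integral>x. (Ex1f x * Ex1f x) ^ n * w x \<partial>?M)"
  define IYY where "IYY = (\<lambda>n. \<integral>x. (Ey1f x * Ey1f x) ^ n * w x \<partial>?M)"
  define IX where "IX = (\<lambda>n. \<integral>x. Ex1f x ^ n * w x \<partial>?M)"
  define IY where "IY = (\<lambda>n. \<integral>x. Ey1f x ^ n * w x \<partial>?M)"
  define w0 where "w0 = dir_density \<alpha> \<theta>s"
  define a where "a = w0 * Gs AS"
  define b where "b = w0 * Gs AQ2"
  define c where "c = w0 * Gs AR2"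
  have w0: "w0 > 0" unfolding w0_def by (rule w0_pos)
  have bpos: "b > 0" unfolding b_def using w0 Gs_pos[OF posdef_AQ2] by simp
  have cpos: "c > 0" unfolding c_def using w0 Gs_pos[OF posdef_AR2] by simp
  have LXY: "(\<lambda>n. sq n * IXY n) \<longlonglongrightarrow> a" using lap_XY unfolding sq_def IXY_def a_def w0_def Gs_def m_def .
  have LXX: "(\<lambda>n. sq n * IXX n) \<longlonglongrightarrow> b" using lap_XX unfolding sq_def IXX_def b_def w0_def Gs_def m_def .
  have LYY: "(\<lambda>n. sq n * IYY n) \<longlonglongrightarrow> c" using lap_YY unfolding sq_def IYY_def c_def w0_def Gs_def m_def .
  have LX: "(\<lambda>n. sq n * IX n) \<longlonglongrightarrow> w0 * Gs AQ" using lap_X unfolding sq_def IX_def w0_def Gs_def m_def .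
  have LY: "(\<lambda>n. sq n * IY n) \<longlonglongrightarrow> w0 * Gs AR" using lap_Y unfolding sq_def IY_def w0_def Gs_def m_def .
  have h0: "(\<lambda>n. inverse (sq n)) \<longlonglongrightarrow> 0"
  proof -
    have "(\<lambda>n. (1 / sqrt (real n)) ^ m) \<longlonglongrightarrow> 0 ^ m"
      by (intro tendsto_power c_over_sqrt)
    moreover have "(0::real) ^ m = 0" using card_J_pos unfolding m_def by simp
    ultimately show ?thesis unfolding sq_def by (simp add: power_one_over inverse_eq_divide)
  qed
  define F where "F = (\<lambda>n. (sq n * IXY n - (sq n * IX n) * (sq n * IY n) * inverse (sq n)) /
      sqrt ((sq n * IXX n - (sq n * IX n)\<^sup>2 * inverse (sq n)) * (sq n * IYY n - (sq n * IY n)\<^sup>2 * inverse (sq n))))"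
  have FL: "F \<longlonglongrightarrow> (a - (w0 * Gs AQ) * (w0 * Gs AR) * 0) / sqrt ((b - (w0 * Gs AQ)\<^sup>2 * 0) * (c - (w0 * Gs AR)\<^sup>2 * 0))"
    unfolding F_def using bpos cpos
    by (intro tendsto_intros LXY LXX LYY LX LY h0) auto
  have ev: "eventually (\<lambda>n. F n = dir_corr \<alpha> (\<lambda>\<theta>. exp (real n * lda_H \<phi> p \<theta>)) (exp_Hhat (real n) (lda_H \<phi> p \<theta>s) \<theta>s)) sequentially"
    using eventually_ge_at_top[of "1::nat"]
  proof eventually_elim
    case (elim n)
    define e where "e = exp (real n * Hs)"
    have e: "e > 0" unfolding e_def by simp
    have sqp: "sq n > 0" unfolding sq_def using elim by simp
    let ?X = "\<lambda>\<theta>. exp (real n * lda_H \<phi> p \<theta>)"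
    let ?Y = "exp_Hhat (real n) Hs \<theta>s"
    have EXY: "dir_expect \<alpha> (\<lambda>t. ?X t * ?Y t) = (e * e) * IXY n"
      unfolding dir_expect_J IXY_def X_lift Y_lift[OF elim] e_def[symmetric]
      by (simp add: power_mult_distrib mult_ac)
    have EXX: "dir_expect \<alpha> (\<lambda>t. (?X t)\<^sup>2) = (e * e) * IXX n"
      unfolding dir_expect_J IXX_def X_lift e_def[symmetric]
      by (simp add: power_mult_distrib power2_eq_square mult_ac)
    have EYY: "dir_expect \<alpha> (\<lambda>t. (?Y t)\<^sup>2) = (e * e) * IYY n"
      unfolding dir_expect_J IYY_def Y_lift[OF elim] e_def[symmetric]
      by (simp add: power_mult_distrib power2_eq_square mult_ac)
    have EX: "dir_expect \<alpha> ?X = e * IX n"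
      unfolding dir_expect_J IX_def X_lift e_def[symmetric] by (simp add: mult_ac)
    have EY: "dir_expect \<alpha> ?Y = e * IY n"
      unfolding dir_expect_J IY_def Y_lift[OF elim] e_def[symmetric] by (simp add: mult_ac)
    have "dir_corr \<alpha> ?X ?Y = ((e * e) * (IXY n - IX n * IY n)) /
        sqrt (((e * e) * (IXX n - (IX n)\<^sup>2)) * ((e * e) * (IYY n - (IY n)\<^sup>2)))"
      unfolding dir_corr_def EXY EXX EYY EX EY by (simp add: algebra_simps power2_eq_square)
    also have "\<dots> = (IXY n - IX n * IY n) / sqrt ((IXX n - (IX n)\<^sup>2) * (IYY n - (IY n)\<^sup>2))"
      by (rule ratio_scale) (use e in simp)
    also have "\<dots> = (sq n * (IXY n - IX n * IY n)) / sqrt ((sq n * (IXX n - (IX n)\<^sup>2)) * (sq n * (IYY n - (IY n)\<^sup>2)))"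
      by (rule ratio_scale[symmetric]) (rule sqp)
    also have "\<dots> = F n"
      unfolding F_def using sqp by (simp add: algebra_simps power2_eq_square)
    finally show ?case unfolding Hs_def by simp
  qed
  have L1: "(\<lambda>n. dir_corr \<alpha> (\<lambda>\<theta>. exp (real n * lda_H \<phi> p \<theta>)) (exp_Hhat (real n) (lda_H \<phi> p \<theta>s) \<theta>s))
      \<longlonglongrightarrow> a / sqrt (b * c)"
    using Lim_transform_eventually[OF FL ev] by simp
  have L2: "(\<lambda>n. (dir_corr \<alpha> (\<lambda>\<theta>. exp (real n * lda_H \<phi> p \<theta>)) (exp_Hhat (real n) (lda_H \<phi> p \<theta>s) \<theta>s))\<^sup>2)
      \<longlonglongrightarrow> (a / sqrt (b * c))\<^sup>2"
    by (rule tendsto_power[OF L1])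
  define T where "T = (2*pi) powr (m / 2)"
  have T: "T > 0" unfolding T_def by simp
  define dQ where "dQ = detE J AQ"
  define dR where "dR = detE J AR"
  define dS where "dS = detE J AS"
  have dQ: "dQ > 0" unfolding dQ_def by (rule gaussJ_int(2)[OF posdef_AQ])
  have dR: "dR > 0" unfolding dR_def by (rule gaussJ_int(2)[OF posdef_AR])
  have dS: "dS > 0" unfolding dS_def by (rule gaussJ_int(2)[OF posdef_AS])
  have dQ2: "detE J AQ2 = 2 ^ m * dQ" unfolding AQ2_def dQ_def m_def by (rule detE_scale)
  have dR2: "detE J AR2 = 2 ^ m * dR" unfolding AR2_def dR_def m_def by (rule detE_scale)
  have GS: "Gs AS = T / sqrt dS" using Gs_val[OF posdef_AS] unfolding T_def dS_def m_def .
  have GQ2: "Gs AQ2 = T / sqrt (2 ^ m * dQ)" using Gs_val[OF posdef_AQ2] unfolding T_def dQ2 m_def .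
  have GR2: "Gs AR2 = T / sqrt (2 ^ m * dR)" using Gs_val[OF posdef_AR2] unfolding T_def dR2 m_def .
  have val1: "(a / sqrt (b * c))\<^sup>2 = 2 ^ m * sqrt dQ * sqrt dR / dS"
  proof -
    have s2: "sqrt 2 ^ m * sqrt 2 ^ m = (2::real) ^ m" by (simp add: power_mult_distrib[symmetric])
    have "(a / sqrt (b * c))\<^sup>2 = a\<^sup>2 / (b * c)" using bpos cpos by (simp add: power_divide)
    also have "\<dots> = (Gs AS)\<^sup>2 / (Gs AQ2 * Gs AR2)" unfolding a_def b_def c_def using w0
      by (simp add: power2_eq_square field_simps)
    also have "\<dots> = 2 ^ m * sqrt dQ * sqrt dR / dS"
      unfolding GS GQ2 GR2 using T dQ dR dS s2
      by (simp add: power_divide real_sqrt_mult real_sqrt_power field_simps power2_eq_square)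
    finally show ?thesis .
  qed
  define K where "K = CARD('k)"
  have Km: "K = m + 1" unfolding K_def m_def card_J using K2 by simp
  define Qv :: "real^'k^'k" where "Qv = (\<chi> i j. hessian (lda_H \<phi> p) \<theta>s i j)"
  define Rv :: "real^'k^'k" where "Rv = (\<chi> i j. if i = j then - 1 / \<theta>s i else 0)"
  have Qv: "Qv = (\<chi> i j. (-1) * (\<chi> i j. NQ i j :: real^'k^'k) $ i $ j)"
    unfolding Qv_def by (simp add: vec_eq_iff hess NQ_def)
  have Rv: "Rv = (\<chi> i j. (-1) * (\<chi> i j. NR i j :: real^'k^'k) $ i $ j)"
    unfolding Rv_def by (simp add: vec_eq_iff NR_def Rm_def)
  have Sv: "(1/2) *\<^sub>R (Qv + Rv) = (\<chi> i j. (-1/2) * (\<chi> i j. NQ i j + NR i j :: real^'k^'k) $ i $ j)"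
    unfolding Qv_def Rv_def by (simp add: vec_eq_iff hess NQ_def NR_def Rm_def algebra_simps)
  have detQ: "\<bar>det Qv\<bar> = dQ"
    unfolding Qv det_scale_rows det_NQ dQ_def[symmetric] using dQ by (simp add: abs_mult)
  have detR: "\<bar>det Rv\<bar> = dR"
    unfolding Rv det_scale_rows det_NR dR_def[symmetric] using dR by (simp add: abs_mult)
  have detS: "\<bar>det ((1/2) *\<^sub>R (Qv + Rv))\<bar> = (1/2) ^ K * (2 * dS)"
    unfolding Sv det_scale_rows det_NS AS_def[symmetric] dS_def[symmetric] K_def using dS
    by (simp add: abs_mult power_abs)
  have val2: "sqrt \<bar>det Qv\<bar> * sqrt \<bar>det Rv\<bar> / \<bar>det ((1/2) *\<^sub>R (Qv + Rv))\<bar> = 2 ^ m * sqrt dQ * sqrt dR / dS"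
    unfolding detQ detR detS Km using dS by (simp add: power_one_over field_simps)
  show ?thesis using L2 unfolding val1 val2[symmetric] Qv_def Rv_def Let_def .
qed

end

theorem corollary2:
  fixes \<phi> :: "'k::finite \<Rightarrow> 'v::finite \<Rightarrow> real"
    and p :: "'v \<Rightarrow> real"
    and \<theta>s :: "'k \<Rightarrow> real"
    and \<alpha> :: "'k \<Rightarrow> real"
  assumes K2: "CARD('k) \<ge> 2"
    and phi_simplex: "\<And>k. (\<lambda>v. \<phi> k v) \<in> prob_simplex"
    and phi_pos: "\<And>k v. 0 < \<phi> k v"
    and p_simplex: "p \<in> prob_simplex"
    and ts_simplex: "\<theta>s \<in> prob_simplex"
    and ts_pos: "\<And>k. 0 < \<theta>s k"
    and unique_max: "\<And>\<theta>. \<theta> \<in> prob_simplex \<Longrightarrow> \<theta> \<noteq> \<theta>s \<Longrightarrow> lda_H \<phi> p \<theta> < lda_H \<phi> p \<theta>s"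
    and neg_def: "\<And>d :: 'k \<Rightarrow> real. (\<exists>k. d k \<noteq> 0) \<Longrightarrow> (\<Sum>k\<in>UNIV. d k) = 0 \<Longrightarrow>
                    (\<Sum>i\<in>UNIV. \<Sum>j\<in>UNIV. d i * hessian (lda_H \<phi> p) \<theta>s i j * d j) < 0"
    and alpha_pos: "\<And>k. 0 < \<alpha> k"
  shows "(\<lambda>n::nat. (dir_corr \<alpha> (\<lambda>\<theta>. exp (real n * lda_H \<phi> p \<theta>))
                             (exp_Hhat (real n) (lda_H \<phi> p \<theta>s) \<theta>s))\<^sup>2)
         \<longlonglongrightarrow>
         (let Q = (\<chi> i j. hessian (lda_H \<phi> p) \<theta>s i j) :: real^'k^'k;
              R = (\<chi> i j. if i = j then - 1 / \<theta>s i else 0) :: real^'k^'k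
          in sqrt \<bar>det Q\<bar> * sqrt \<bar>det R\<bar> / \<bar>det ((1/2) *\<^sub>R (Q + R))\<bar>)"
proof -
  interpret lda \<phi> p \<theta>s \<alpha>
    by (rule lda.intro[OF K2 phi_simplex phi_pos p_simplex ts_simplex ts_pos unique_max neg_def alpha_pos])
  show ?thesis by (rule main_limit)
qed

end
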